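(* Let $T=((\Omega,\mathcal{A}),\{(\Omega,\mathcal{M}_i)\}_{i\in N},\{t_i\}_{i\in N})$ be a type space. Then exactly one of the following holds: (a) the players' beliefs in $T$ are consistent; (b) $T$ admits a money pump.
   Context: A field on a set $X$ is a collection of subsets of $X$ containing $X$ and closed under complements and finite intersections. For a field $\mathcal{A}$ on $\Omega$, $\mathrm{pba}(\Omega,\mathcal{A})$ is the set of finitely additive nonnegative $P:\mathcal{A}\to\mathbb{R}$ with $P(\Omega)=1$; $\mathrm{ba}(\Omega,\mathcal{A})$ is the space of bounded finitely additive real set functions on $\mathcal{A}$; $B(\Omega,\mathcal{A})$ is the sup-norm closure of the linear span of indicators of sets in $\mathcal{A}$ (these functions are integrable against every element of $\mathrm{ba}(\Omega,\mathcal{A})$). $\mathrm{ba}(\Omega,\mathcal{A})$ carries the weak* topology, the weakest topology making $\mu\mapsto\int f\,d\mu$ continuous for all $f\in B(\Omega,\mathcal{A})$; $\overline{\,\cdot\,}^\ast$ denotes weak* closure. A type space is $T=((\Omega,\mathcal{A}),\{(\Omega,\mathcal{M}_i)\}_{i\in N},\{t_i\}_{i\in N})$ with $N$ a nonempty set of players, $\Omega$ a set, $\mathcal{A}$ and $\mathcal{M}_i\subseteq\mathcal{A}$ fields on $\Omega$, and $t_i:\Omega\times\mathcal{A}\to[0,1]$ with: $t_i(\omega,\cdot)\in\mathrm{pba}(\Omega,\mathcal{A})$ for all $\omega$; $t_i(\cdot,E)\in B(\Omega,\mathcal{M}_i)$ for all $E\in\mathcal{A}$; $t_i(\omega,E)=1$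 whenever $E\in\mathcal{M}_i$, $\omega\in E$. For $i\in N$ let $\Pi_i=\overline{\mathrm{conv}\{t_i(\omega,\cdot):\omega\in\Omega\}}^\ast$ (equivalently, the set of $P\in\mathrm{pba}(\Omega,\mathcal{A})$ with $P(E\cap F)=\int_F t_i(\cdot,E)\,dP$ for all $E\in\mathcal{A}$, $F\in\mathcal{M}_i$). The players' beliefs are consistent if $\bigcap_{i\in I}\Pi_i\neq\emptyset$ for every finite $I\subseteq N$. For $I\subseteq N$, a nonempty $S\subseteq\Omega$ (not necessarily in $\mathcal{A}$) is an $I$-common certainty component if there is $E\in\mathcal{A}$ with $E\subseteq S$ and $t_i(\omega,E)=1$ for all $\omega\in S$, $i\in I$. A set $E\subseteq\Omega$ is $I$-commonly certain at $\omega$ if there is an $I$-common certainty component $S$ with $\omega\in S\subseteq E$. A semi-bet is a family $(f_i)_{i\in I}\subseteq B(\Omega,\mathcal{A})$ with $I\subseteq N$ finite such that for every $\omega\in\Omega$ the set $\{\omega'\in\Omega:\int f_i\,dt_i(\omega',\cdot)\ge0\ \forall i\in I\}$ is $I$-commonly certain at $\omega$. $T$ admits a money pump if for every $P\in\mathrm{pba}(\Omega,\mathcal{A})$ there is a semi-bet $(f_i)_{i\in I}$ with $\int\sum_{i\in I}f_i\,dP<0$. *)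

theory Defs
  imports Complex_Main
begin

definition is_field :: "'w set \<Rightarrow> 'w set set \<Rightarrow> bool" where
  "is_field Omega A \<longleftrightarrow> A \<subseteq> Pow Omega \<and> Omega \<in> A \<and>
     (\<forall>E\<in>A. Omega - E \<in> A) \<and> (\<forall>E\<in>A. \<forall>F\<in>A. E \<inter> F \<in> A)"

(* finitely additive real set functions on A; set functions are normalised to be 0 off A *)
definition fin_add :: "'w set set \<Rightarrow> ('w set \<Rightarrow> real) \<Rightarrow> bool" where
  "fin_add A mu \<longleftrightarrow> (\<forall>E\<in>A. \<forall>F\<in>A. E \<inter> F = {} \<longrightarrow> mu (E \<union> F) = mu E + mu F)"

definition ba :: "'w set \<Rightarrow> 'w set set \<Rightarrow> ('w set \<Rightarrow> real) set" where
  "ba Omega A = {mu. fin_add A mu \<and> (\<exists>B. \<forall>E\<in>A. \<bar>mu E\<bar> \<le> B) \<and> (\<forall>E. E \<notin> A \<longrightarrow> mu E = 0)}"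

definition pba :: "'w set \<Rightarrow> 'w set set \<Rightarrow> ('w set \<Rightarrow> real) set" where
  "pba Omega A = {P. fin_add A P \<and> (\<forall>E\<in>A. P E \<ge> 0) \<and> P Omega = 1 \<and> (\<forall>E. E \<notin> A \<longrightarrow> P E = 0)}"

(* A-simple functions on Omega = (restrictions to Omega of) the linear span of indicators of sets in A *)
definition simple_fn :: "'w set \<Rightarrow> 'w set set \<Rightarrow> ('w \<Rightarrow> real) \<Rightarrow> bool" where
  "simple_fn Omega A s \<longleftrightarrow> finite (s ` Omega) \<and> (\<forall>c. {w\<in>Omega. s w = c} \<in> A)"

definition simple_integral :: "'w set \<Rightarrow> ('w set \<Rightarrow> real) \<Rightarrow> ('w \<Rightarrow> real) \<Rightarrow> real" where
  "simple_integral Omega mu s = (\<Sum>c\<in>s ` Omega. c * mu {w\<in>Omega. s w = c})"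

definition Bsp :: "'w set \<Rightarrow> 'w set set \<Rightarrow> ('w \<Rightarrow> real) set" where
  "Bsp Omega A = {f. \<forall>e>0. \<exists>s. simple_fn Omega A s \<and> (\<forall>w\<in>Omega. \<bar>f w - s w\<bar> < e)}"

definition integ :: "'w set \<Rightarrow> 'w set set \<Rightarrow> ('w set \<Rightarrow> real) \<Rightarrow> ('w \<Rightarrow> real) \<Rightarrow> real" where
  "integ Omega A mu f = (THE r. \<exists>s. (\<forall>n. simple_fn Omega A (s n)) \<and>
      (\<forall>n. \<forall>w\<in>Omega. \<bar>f w - s n w\<bar> \<le> 1 / real (Suc n)) \<and>
      (\<lambda>n. simple_integral Omega mu (s n)) \<longlonglongrightarrow> r)"

definition wstar_closure :: "'w set \<Rightarrow> 'w set set \<Rightarrow> ('w set \<Rightarrow> real) set \<Rightarrow> ('w set \<Rightarrow> real) set" where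
  "wstar_closure Omega A S = {mu \<in> ba Omega A. \<forall>F e. finite F \<and> F \<subseteq> Bsp Omega A \<and> e > 0 \<longrightarrow>
      (\<exists>nu\<in>S. \<forall>f\<in>F. \<bar>integ Omega A mu f - integ Omega A nu f\<bar> < e)}"

definition conv_sf :: "('w set \<Rightarrow> real) set \<Rightarrow> ('w set \<Rightarrow> real) set" where
  "conv_sf S = {mu. \<exists>(K::nat set) c m. finite K \<and> (\<forall>k\<in>K. c k \<ge> 0 \<and> m k \<in> S) \<and>
      sum c K = 1 \<and> mu = (\<lambda>E. \<Sum>k\<in>K. c k * m k E)}"

definition belief :: "'w set set \<Rightarrow> ('i \<Rightarrow> 'w \<Rightarrow> 'w set \<Rightarrow> real) \<Rightarrow> 'i \<Rightarrow> 'w \<Rightarrow> 'w set \<Rightarrow> real" where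
  "belief A t i w = (\<lambda>E. if E \<in> A then t i w E else 0)"

definition type_space :: "'i set \<Rightarrow> 'w set \<Rightarrow> 'w set set \<Rightarrow> ('i \<Rightarrow> 'w set set)
      \<Rightarrow> ('i \<Rightarrow> 'w \<Rightarrow> 'w set \<Rightarrow> real) \<Rightarrow> bool" where
  "type_space N Omega A M t \<longleftrightarrow> N \<noteq> {} \<and> is_field Omega A \<and>
     (\<forall>i\<in>N. is_field Omega (M i) \<and> M i \<subseteq> A \<and>
        (\<forall>w\<in>Omega. \<forall>E\<in>A. 0 \<le> t i w E \<and> t i w E \<le> 1) \<and>
        (\<forall>w\<in>Omega. belief A t i w \<in> pba Omega A) \<and>
        (\<forall>E\<in>A. (\<lambda>w. t i w E) \<in> Bsp Omega (M i)) \<and>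
        (\<forall>E\<in>M i. \<forall>w\<in>E. t i w E = 1))"

definition Pi_set :: "'w set \<Rightarrow> 'w set set \<Rightarrow> ('i \<Rightarrow> 'w \<Rightarrow> 'w set \<Rightarrow> real) \<Rightarrow> 'i \<Rightarrow> ('w set \<Rightarrow> real) set" where
  "Pi_set Omega A t i = wstar_closure Omega A (conv_sf (belief A t i ` Omega))"

definition consistent :: "'i set \<Rightarrow> 'w set \<Rightarrow> 'w set set \<Rightarrow> ('i \<Rightarrow> 'w \<Rightarrow> 'w set \<Rightarrow> real) \<Rightarrow> bool" where
  "consistent N Omega A t \<longleftrightarrow> (\<forall>I. finite I \<and> I \<subseteq> N \<longrightarrow> (\<Inter>i\<in>I. Pi_set Omega A t i) \<noteq> {})"

definition cc_component :: "'w set \<Rightarrow> 'w set set \<Rightarrow> ('i \<Rightarrow> 'w \<Rightarrow> 'w set \<Rightarrow> real) \<Rightarrow> 'i set \<Rightarrow> 'w set \<Rightarrow> bool" where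
  "cc_component Omega A t I S \<longleftrightarrow> S \<noteq> {} \<and> S \<subseteq> Omega \<and>
     (\<exists>E\<in>A. E \<subseteq> S \<and> (\<forall>w\<in>S. \<forall>i\<in>I. t i w E = 1))"

definition commonly_certain :: "'w set \<Rightarrow> 'w set set \<Rightarrow> ('i \<Rightarrow> 'w \<Rightarrow> 'w set \<Rightarrow> real) \<Rightarrow> 'i set \<Rightarrow> 'w set \<Rightarrow> 'w \<Rightarrow> bool" where
  "commonly_certain Omega A t I E w \<longleftrightarrow> (\<exists>S. cc_component Omega A t I S \<and> w \<in> S \<and> S \<subseteq> E)"

definition semi_bet :: "'i set \<Rightarrow> 'w set \<Rightarrow> 'w set set \<Rightarrow> ('i \<Rightarrow> 'w \<Rightarrow> 'w set \<Rightarrow> real) \<Rightarrow> 'i set \<Rightarrow> ('i \<Rightarrow> 'w \<Rightarrow> real) \<Rightarrow> bool" where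
  "semi_bet N Omega A t I f \<longleftrightarrow> finite I \<and> I \<subseteq> N \<and> (\<forall>i\<in>I. f i \<in> Bsp Omega A) \<and>
     (\<forall>w\<in>Omega. commonly_certain Omega A t I
        {w'\<in>Omega. \<forall>i\<in>I. integ Omega A (belief A t i w') (f i) \<ge> 0} w)"

definition money_pump :: "'i set \<Rightarrow> 'w set \<Rightarrow> 'w set set \<Rightarrow> ('i \<Rightarrow> 'w \<Rightarrow> 'w set \<Rightarrow> real) \<Rightarrow> bool" where
  "money_pump N Omega A t \<longleftrightarrow> (\<forall>P\<in>pba Omega A. \<exists>I f. semi_bet N Omega A t I f \<and>
     integ Omega A P (\<lambda>w. \<Sum>i\<in>I. f i w) < 0)"

end

theory Submission
  imports Defs "HOL-Analysis.Function_Topology"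
begin

section \<open>Fields\<close>

lemma field_empty: "is_field Omega A \<Longrightarrow> {} \<in> A"
  unfolding is_field_def by (metis Diff_cancel)
lemma field_top: "is_field Omega A \<Longrightarrow> Omega \<in> A"
  unfolding is_field_def by blast
lemma field_sub: "is_field Omega A \<Longrightarrow> E \<in> A \<Longrightarrow> E \<subseteq> Omega"
  unfolding is_field_def by blast
lemma field_Int: "is_field Omega A \<Longrightarrow> E \<in> A \<Longrightarrow> F \<in> A \<Longrightarrow> E \<inter> F \<in> A"
  unfolding is_field_def by blast
lemma field_compl: "is_field Omega A \<Longrightarrow> E \<in> A \<Longrightarrow> Omega - E \<in> A"
  unfolding is_field_def by blast
lemma field_Un: assumes "is_field Omega A" "E \<in> A" "F \<in> A" shows "E \<union> F \<in> A"
proof -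
  have "E \<union> F = Omega - ((Omega - E) \<inter> (Omega - F))"
    using field_sub[OF assms(1,2)] field_sub[OF assms(1,3)] by blast
  thus ?thesis using assms by (simp add: field_Int field_compl)
qed
lemma field_UN: assumes "is_field Omega A" "finite J" "\<And>j. j \<in> J \<Longrightarrow> h j \<in> A"
  shows "(\<Union>j\<in>J. h j) \<in> A"
  using assms(2,3)
proof (induction J rule: finite_induct)
  case empty then show ?case using field_empty[OF assms(1)] by simp
next
  case (insert x F) then show ?case using field_Un[OF assms(1)] by simp
qed
lemma field_level: assumes "is_field Omega A" "E \<in> A"
  shows "{w\<in>Omega. w \<in> E} = E" using field_sub[OF assms] by blast

section \<open>Finite additivity\<close>

lemma fin_add_empty: assumes "fin_add A mu" "{} \<in> A" shows "mu {} = 0"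
  using assms unfolding fin_add_def by (metis Int_empty_left Un_empty add_cancel_right_right)

lemma fin_add_UN:
  assumes "fin_add A mu" "is_field Omega A" "finite J" "\<And>j. j \<in> J \<Longrightarrow> h j \<in> A"
    "\<And>i j. i \<in> J \<Longrightarrow> j \<in> J \<Longrightarrow> i \<noteq> j \<Longrightarrow> h i \<inter> h j = {}"
  shows "mu (\<Union>j\<in>J. h j) = (\<Sum>j\<in>J. mu (h j))"
  using assms(3,4,5)
proof (induction J rule: finite_induct)
  case empty then show ?case using fin_add_empty[OF assms(1) field_empty[OF assms(2)]] by simp
next
  case (insert x F)
  have "(\<Union>j\<in>insert x F. h j) = h x \<union> (\<Union>j\<in>F. h j)" by simp
  moreover have "h x \<inter> (\<Union>j\<in>F. h j) = {}" using insert by blast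
  moreover have "(\<Union>j\<in>F. h j) \<in> A" using field_UN[OF assms(2) insert(1)] insert by simp
  ultimately have "mu (\<Union>j\<in>insert x F. h j) = mu (h x) + mu (\<Union>j\<in>F. h j)"
    using assms(1) insert unfolding fin_add_def by simp
  then show ?case using insert by simp
qed

lemma pba_ba: assumes "is_field Omega A" "P \<in> pba Omega A"
  shows "P \<in> ba Omega A" and "\<And>E. E \<in> A \<Longrightarrow> 0 \<le> P E \<and> P E \<le> 1"
proof -
  show b: "0 \<le> P E \<and> P E \<le> 1" if "E \<in> A" for E
  proof -
    have u: "Omega = E \<union> (Omega - E)" "E \<inter> (Omega - E) = {}"
      using field_sub[OF assms(1) that] by auto
    have "P (E \<union> (Omega - E)) = P E + P (Omega - E)"
      using assms(2) that field_compl[OF assms(1) that] u(2)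
      unfolding pba_def fin_add_def by blast
    then have "P Omega = P E + P (Omega - E)" using u(1) by simp
    then show ?thesis using assms that field_compl[OF assms(1) that] unfolding pba_def by auto
  qed
  show "P \<in> ba Omega A" using assms b unfolding pba_def ba_def
    by (auto intro!: exI[of _ 1])
qed

section \<open>Simple integrals\<close>

lemma SI_partition:
  assumes F: "is_field Omega A" and fa: "fin_add A mu" and Y: "finite Y" "p ` Omega \<subseteq> Y"
    and lev: "\<And>y. {w\<in>Omega. p w = y} \<in> A"
    and s: "\<And>w. w \<in> Omega \<Longrightarrow> s w = \<phi> (p w)"
  shows "simple_integral Omega mu s = (\<Sum>y\<in>Y. \<phi> y * mu {w\<in>Omega. p w = y})"
proof -
  define Y' where "Y' = {y\<in>Y. \<phi> y \<in> s ` Omega}"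
  have fY': "finite Y'" using Y unfolding Y'_def by simp
  have fs: "finite (s ` Omega)"
  proof -
    have "s ` Omega \<subseteq> \<phi> ` Y" using s Y by force
    thus ?thesis using Y finite_subset by blast
  qed
  have lev_s: "{w\<in>Omega. s w = c} = (\<Union>y\<in>{y\<in>Y'. \<phi> y = c}. {w\<in>Omega. p w = y})" if "c \<in> s ` Omega" for c
    using s Y that unfolding Y'_def by force
  have "simple_integral Omega mu s = (\<Sum>c\<in>s ` Omega. c * mu {w\<in>Omega. s w = c})"
    unfolding simple_integral_def ..
  also have "\<dots> = (\<Sum>c\<in>s ` Omega. (\<Sum>y\<in>{y\<in>Y'. \<phi> y = c}. \<phi> y * mu {w\<in>Omega. p w = y}))"
  proof (rule sum.cong[OF refl])
    fix c assume c: "c \<in> s ` Omega"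
    have "mu {w\<in>Omega. s w = c} = (\<Sum>y\<in>{y\<in>Y'. \<phi> y = c}. mu {w\<in>Omega. p w = y})"
      unfolding lev_s[OF c]
      by (rule fin_add_UN[OF fa F]) (use fY' lev in auto)
    then show "c * mu {w\<in>Omega. s w = c} = (\<Sum>y\<in>{y\<in>Y'. \<phi> y = c}. \<phi> y * mu {w\<in>Omega. p w = y})"
      by (simp add: sum_distrib_left)
  qed
  also have "\<dots> = (\<Sum>y\<in>Y'. \<phi> y * mu {w\<in>Omega. p w = y})"
    by (rule sum.group[OF fY' fs]) (auto simp: Y'_def)
  also have "\<dots> = (\<Sum>y\<in>Y. \<phi> y * mu {w\<in>Omega. p w = y})"
  proof (rule sum.mono_neutral_left[OF Y(1)])
    show "Y' \<subseteq> Y" unfolding Y'_def by auto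
    show "\<forall>i\<in>Y - Y'. \<phi> i * mu {w \<in> Omega. p w = i} = 0"
    proof
      fix y assume y: "y \<in> Y - Y'"
      have e: "{w \<in> Omega. p w = y} = {}" using y s unfolding Y'_def by force
      show "\<phi> y * mu {w \<in> Omega. p w = y} = 0"
        by (simp only: e fin_add_empty[OF fa field_empty[OF F]] mult_zero_right)
    qed
  qed
  finally show ?thesis .
qed

lemma simple_comp:
  assumes F: "is_field Omega A" and fin: "finite (p ` Omega)" and lev: "\<And>y. {w\<in>Omega. p w = y} \<in> A"
  shows "simple_fn Omega A (\<lambda>w. \<phi> (p w))"
  unfolding simple_fn_def
proof
  have "(\<lambda>w. \<phi> (p w)) ` Omega = \<phi> ` (p ` Omega)" by (simp add: image_image)
  then show "finite ((\<lambda>w. \<phi> (p w)) ` Omega)" using fin by simp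
  show "\<forall>c. {w \<in> Omega. \<phi> (p w) = c} \<in> A"
  proof
    fix c
    have "{w \<in> Omega. \<phi> (p w) = c} = (\<Union>y\<in>{y\<in>p ` Omega. \<phi> y = c}. {w\<in>Omega. p w = y})"
    proof (rule set_eqI)
      fix x show "x \<in> {w \<in> Omega. \<phi> (p w) = c} \<longleftrightarrow> x \<in> (\<Union>y\<in>{y\<in>p ` Omega. \<phi> y = c}. {w\<in>Omega. p w = y})"
        by (simp add: image_iff) (metis)
    qed
    also have "\<dots> \<in> A" by (rule field_UN[OF F]) (use fin lev in simp_all)
    finally show "{w \<in> Omega. \<phi> (p w) = c} \<in> A" .
  qed
qed

lemma pair_fin: "simple_fn Omega A s \<Longrightarrow> simple_fn Omega A s' \<Longrightarrow> finite ((\<lambda>w. (s w, s' w)) ` Omega)"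
  unfolding simple_fn_def
  by (rule finite_subset[of _ "s ` Omega \<times> s' ` Omega"]) blast+

lemma pair_lev: assumes F: "is_field Omega A" "simple_fn Omega A s" "simple_fn Omega A s'"
  shows "{w\<in>Omega. (s w, s' w) = y} \<in> A"
proof -
  have "{w\<in>Omega. (s w, s' w) = y} = {w\<in>Omega. s w = fst y} \<inter> {w\<in>Omega. s' w = snd y}" by (cases y) auto
  moreover have "{w\<in>Omega. s w = fst y} \<in> A" "{w\<in>Omega. s' w = snd y} \<in> A"
    using assms(2,3) unfolding simple_fn_def by blast+
  ultimately show ?thesis using field_Int[OF F(1)] by simp
qed

lemma id_lev: "simple_fn Omega A s \<Longrightarrow> {w\<in>Omega. s w = y} \<in> A" unfolding simple_fn_def by blast
lemma id_fin: "simple_fn Omega A s \<Longrightarrow> finite (s ` Omega)" unfolding simple_fn_def by blast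

lemma simple_add: assumes "is_field Omega A" "simple_fn Omega A s" "simple_fn Omega A s'"
  shows "simple_fn Omega A (\<lambda>w. s w + s' w)"
  using simple_comp[OF assms(1) pair_fin[OF assms(2,3)] pair_lev[OF assms], of "\<lambda>(a,b). a + b"] by simp

lemma simple_diff: assumes "is_field Omega A" "simple_fn Omega A s" "simple_fn Omega A s'"
  shows "simple_fn Omega A (\<lambda>w. s w - s' w)"
  using simple_comp[OF assms(1) pair_fin[OF assms(2,3)] pair_lev[OF assms], of "\<lambda>(a,b). a - b"] by simp

lemma simple_scale: assumes "is_field Omega A" "simple_fn Omega A s" shows "simple_fn Omega A (\<lambda>w. a * s w)"
  using simple_comp[OF assms(1) id_fin[OF assms(2)] id_lev[OF assms(2)], of "\<lambda>x. a * x"] by simp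

lemma unit_fin: "finite ((\<lambda>w. ()) ` Omega)" by simp
lemma unit_lev: assumes "is_field Omega A" shows "{w\<in>Omega. (\<lambda>w. ()) w = y} \<in> A"
  using field_top[OF assms] by simp

lemma simple_const: "is_field Omega A \<Longrightarrow> simple_fn Omega A (\<lambda>w. c)"
  using simple_comp[OF _ unit_fin unit_lev, of Omega A "\<lambda>_. c"] by simp

lemma bool_lev: assumes "is_field Omega A" "E \<in> A" shows "{w\<in>Omega. (w \<in> E) = y} \<in> A"
proof (cases y)
  case True
  then have "{w\<in>Omega. (w \<in> E) = y} = E" using field_sub[OF assms] by blast
  then show ?thesis using assms by simp
next
  case False
  then have "{w\<in>Omega. (w \<in> E) = y} = Omega - E" by blast
  then show ?thesis using assms field_compl by simp
qed

lemma bool_fin: "finite ((\<lambda>w. w \<in> E) ` Omega)" by (rule finite_subset[of _ UNIV]) auto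

lemma ind_eq: "(indicator E :: 'a \<Rightarrow> real) = (\<lambda>w. (\<lambda>b. if b then 1 else 0) (w \<in> E))"
  by (rule ext) (simp add: indicator_def)

lemma simple_ind: assumes "is_field Omega A" "E \<in> A" shows "simple_fn Omega A (indicator E :: 'a \<Rightarrow> real)"
  unfolding ind_eq by (rule simple_comp[OF assms(1) bool_fin bool_lev[OF assms]])

lemma simple_sum: assumes F: "is_field Omega A" shows "finite K \<Longrightarrow> (\<And>k. k \<in> K \<Longrightarrow> simple_fn Omega A (s k)) \<Longrightarrow>
   simple_fn Omega A (\<lambda>w. \<Sum>k\<in>K. s k w)"
proof (induction K rule: finite_induct)
  case empty then show ?case using simple_const[OF F] by simp
next
  case (insert x K) then show ?case using simple_add[OF F, of "s x" "\<lambda>w. \<Sum>k\<in>K. s k w"] by simp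
qed

lemma SI_comp:
  assumes F: "is_field Omega A" and fa: "fin_add A mu"
    and fin: "finite (p ` Omega)" and lev: "\<And>y. {w\<in>Omega. p w = y} \<in> A"
  shows "simple_integral Omega mu (\<lambda>w. \<phi> (p w)) = (\<Sum>y\<in>p ` Omega. \<phi> y * mu {w\<in>Omega. p w = y})"
  by (rule SI_partition[OF F fa fin _ lev]) simp_all

lemma SI_cong: "(\<And>w. w \<in> Omega \<Longrightarrow> s w = s' w) \<Longrightarrow> simple_integral Omega mu s = simple_integral Omega mu s'"
proof -
  assume h: "\<And>w. w \<in> Omega \<Longrightarrow> s w = s' w"
  have 1: "s ` Omega = s' ` Omega" using h by (rule image_cong[OF refl])
  have 2: "{w\<in>Omega. s w = c} = {w\<in>Omega. s' w = c}" for c using h by auto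
  show ?thesis unfolding simple_integral_def 1 2 ..
qed

lemma SI_pair:
  assumes F: "is_field Omega A" and fa: "fin_add A mu" "simple_fn Omega A s" "simple_fn Omega A s'"
  shows "simple_integral Omega mu (\<lambda>w. \<phi> (s w, s' w)) =
    (\<Sum>y\<in>(\<lambda>w. (s w, s' w)) ` Omega. \<phi> y * mu {w\<in>Omega. (s w, s' w) = y})"
  using SI_comp[OF F fa(1) pair_fin[OF fa(2,3)] pair_lev[OF F fa(2,3)], of \<phi>] by simp

lemma SI_add:
  assumes F: "is_field Omega A" and fa: "fin_add A mu" "simple_fn Omega A s" "simple_fn Omega A s'"
  shows "simple_integral Omega mu (\<lambda>w. s w + s' w) = simple_integral Omega mu s + simple_integral Omega mu s'"
proof -
  let ?Y = "(\<lambda>w. (s w, s' w)) ` Omega" and ?L = "\<lambda>y. mu {w\<in>Omega. (s w, s' w) = y}"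
  have 1: "simple_integral Omega mu (\<lambda>w. s w + s' w) = (\<Sum>y\<in>?Y. (fst y + snd y) * ?L y)"
    using SI_pair[OF assms, of "\<lambda>y. fst y + snd y"] by simp
  have 2: "simple_integral Omega mu s = (\<Sum>y\<in>?Y. fst y * ?L y)"
    using SI_pair[OF assms, of "\<lambda>y. fst y"] by simp
  have 3: "simple_integral Omega mu s' = (\<Sum>y\<in>?Y. snd y * ?L y)"
    using SI_pair[OF assms, of "\<lambda>y. snd y"] by simp
  show ?thesis unfolding 1 2 3 by (simp add: distrib_right sum.distrib)
qed

lemma SI_diff:
  assumes F: "is_field Omega A" and fa: "fin_add A mu" "simple_fn Omega A s" "simple_fn Omega A s'"
  shows "simple_integral Omega mu (\<lambda>w. s w - s' w) = simple_integral Omega mu s - simple_integral Omega mu s'"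
proof -
  let ?Y = "(\<lambda>w. (s w, s' w)) ` Omega" and ?L = "\<lambda>y. mu {w\<in>Omega. (s w, s' w) = y}"
  have 1: "simple_integral Omega mu (\<lambda>w. s w - s' w) = (\<Sum>y\<in>?Y. (fst y - snd y) * ?L y)"
    using SI_pair[OF assms, of "\<lambda>y. fst y - snd y"] by simp
  have 2: "simple_integral Omega mu s = (\<Sum>y\<in>?Y. fst y * ?L y)"
    using SI_pair[OF assms, of "\<lambda>y. fst y"] by simp
  have 3: "simple_integral Omega mu s' = (\<Sum>y\<in>?Y. snd y * ?L y)"
    using SI_pair[OF assms, of "\<lambda>y. snd y"] by simp
  show ?thesis unfolding 1 2 3 by (simp add: left_diff_distrib sum_subtractf)
qed

lemma SI_scale:
  assumes F: "is_field Omega A" and fa: "fin_add A mu" "simple_fn Omega A s"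
  shows "simple_integral Omega mu (\<lambda>w. a * s w) = a * simple_integral Omega mu s"
proof -
  have 1: "simple_integral Omega mu (\<lambda>w. a * s w) = (\<Sum>y\<in>s ` Omega. (a * y) * mu {w\<in>Omega. s w = y})"
    using SI_comp[OF F fa(1) id_fin[OF fa(2)] id_lev[OF fa(2)], of "\<lambda>y. a * y"] by simp
  have 2: "a * simple_integral Omega mu s = (\<Sum>y\<in>s ` Omega. (a * y) * mu {w\<in>Omega. s w = y})"
    unfolding simple_integral_def by (simp add: sum_distrib_left mult.assoc)
  show ?thesis using 1 2 by simp
qed

lemma SI_const:
  assumes F: "is_field Omega A" and fa: "fin_add A mu"
  shows "simple_integral Omega mu (\<lambda>w. c) = c * mu Omega"
proof (cases "Omega = {}")
  case True
  then show ?thesis using fin_add_empty[OF fa field_empty[OF F]] by (simp add: simple_integral_def)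
next
  case False
  then have "(\<lambda>w. c) ` Omega = {c}" by auto
  then show ?thesis by (simp add: simple_integral_def)
qed

lemma SI_ind:
  assumes F: "is_field Omega A" and fa: "fin_add A mu" and E: "E \<in> A"
  shows "simple_integral Omega mu (indicator E) = mu E"
proof -
  have "simple_integral Omega mu (\<lambda>w. (\<lambda>b. if b then 1 else 0) (w \<in> E)) =
      (\<Sum>y\<in>{True, False}. (if y then 1 else 0) * mu {w\<in>Omega. (w \<in> E) = y})"
    by (rule SI_partition[OF F fa]) (use bool_lev[OF F E] in auto)
  moreover have "{w\<in>Omega. (w \<in> E) = True} = E" using field_sub[OF F E] by blast
  ultimately show ?thesis unfolding ind_eq by simp
qed

lemma SI_mix:
  "simple_integral Omega (\<lambda>E. \<Sum>k\<in>K. c k * m k E) s = (\<Sum>k\<in>K. c k * simple_integral Omega (m k) s)"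
  unfolding simple_integral_def
  by (simp add: sum_distrib_left sum.swap[of _ K] mult.left_commute)

lemma SI_bound:
  assumes F: "is_field Omega A" and mu: "fin_add A mu" and B: "\<And>E. E \<in> A \<Longrightarrow> \<bar>mu E\<bar> \<le> B"
    and s: "simple_fn Omega A s" and r: "\<And>w. w \<in> Omega \<Longrightarrow> \<bar>s w\<bar> \<le> r" "0 \<le> r"
  shows "\<bar>simple_integral Omega mu s\<bar> \<le> 2 * B * r"
proof -
  let ?C = "s ` Omega" and ?L = "\<lambda>c. {w\<in>Omega. s w = c}"
  have fC: "finite ?C" using s unfolding simple_fn_def by blast
  have LA: "?L c \<in> A" for c using s unfolding simple_fn_def by blast
  have disj: "\<And>i j. i \<noteq> j \<Longrightarrow> ?L i \<inter> ?L j = {}" by blast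
  define Pos where "Pos = {c\<in>?C. 0 \<le> mu (?L c)}"
  define Neg where "Neg = {c\<in>?C. \<not> 0 \<le> mu (?L c)}"
  have fP: "finite Pos" "finite Neg" using fC unfolding Pos_def Neg_def by simp_all
  have sP: "(\<Sum>c\<in>Pos. mu (?L c)) = mu (\<Union>c\<in>Pos. ?L c)"
    by (rule fin_add_UN[OF mu F fP(1), symmetric]) (use LA disj in blast)+
  have sN: "(\<Sum>c\<in>Neg. mu (?L c)) = mu (\<Union>c\<in>Neg. ?L c)"
    by (rule fin_add_UN[OF mu F fP(2), symmetric]) (use LA disj in blast)+
  have bP: "\<bar>mu (\<Union>c\<in>Pos. ?L c)\<bar> \<le> B" by (rule B, rule field_UN[OF F fP(1)]) (rule LA)
  have bN: "\<bar>mu (\<Union>c\<in>Neg. ?L c)\<bar> \<le> B" by (rule B, rule field_UN[OF F fP(2)]) (rule LA)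
  have CU: "?C = Pos \<union> Neg" "Pos \<inter> Neg = {}" unfolding Pos_def Neg_def by blast+
  have split: "(\<Sum>c\<in>?C. \<bar>mu (?L c)\<bar>) = (\<Sum>c\<in>Pos. \<bar>mu (?L c)\<bar>) + (\<Sum>c\<in>Neg. \<bar>mu (?L c)\<bar>)"
    unfolding CU(1) by (rule sum.union_disjoint[OF fP CU(2)])
  have "(\<Sum>c\<in>Pos. \<bar>mu (?L c)\<bar>) = (\<Sum>c\<in>Pos. mu (?L c))" by (rule sum.cong) (simp_all add: Pos_def)
  moreover have "(\<Sum>c\<in>Neg. \<bar>mu (?L c)\<bar>) = (\<Sum>c\<in>Neg. - mu (?L c))" by (rule sum.cong) (simp_all add: Neg_def)
  moreover have "(\<Sum>c\<in>Neg. - mu (?L c)) = - (\<Sum>c\<in>Neg. mu (?L c))" by (rule sum_negf)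
  ultimately have tot: "(\<Sum>c\<in>?C. \<bar>mu (?L c)\<bar>) \<le> 2 * B"
    using split sP sN bP bN by linarith
  have "\<bar>simple_integral Omega mu s\<bar> \<le> (\<Sum>c\<in>?C. \<bar>c * mu (?L c)\<bar>)"
    unfolding simple_integral_def by (rule sum_abs)
  also have "\<dots> \<le> (\<Sum>c\<in>?C. r * \<bar>mu (?L c)\<bar>)"
  proof (rule sum_mono)
    fix c assume "c \<in> ?C"
    then have "\<bar>c\<bar> \<le> r" using r by blast
    then show "\<bar>c * mu (?L c)\<bar> \<le> r * \<bar>mu (?L c)\<bar>" by (simp add: abs_mult mult_right_mono)
  qed
  also have "\<dots> = r * (\<Sum>c\<in>?C. \<bar>mu (?L c)\<bar>)" by (simp add: sum_distrib_left)
  also have "\<dots> \<le> r * (2 * B)" using tot r(2) by (rule mult_left_mono)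
  finally show ?thesis by (simp add: mult.commute mult.left_commute)
qed

lemma small_zero:
  fixes x C :: real
  assumes "0 \<le> C" "\<And>e. 0 < e \<Longrightarrow> \<bar>x\<bar> \<le> C * e"
  shows "x = 0"
proof (rule ccontr)
  assume "x \<noteq> 0"
  then have p: "0 < \<bar>x\<bar> / (C + 1)" using assms(1) by simp
  have "\<bar>x\<bar> \<le> C * (\<bar>x\<bar> / (C + 1))" using assms(2)[OF p] .
  also have "\<dots> < \<bar>x\<bar>" using \<open>x \<noteq> 0\<close> assms(1) by (simp add: field_simps)
  finally show False by simp
qed

lemma bound_nonneg: fixes mu :: "'a set \<Rightarrow> real"
  assumes F: "is_field Omega A" and Bd: "\<And>E. E \<in> A \<Longrightarrow> \<bar>mu E\<bar> \<le> B" shows "0 \<le> B"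
  using Bd[OF field_empty[OF F]] by linarith

lemma Bsp_seq: assumes "f \<in> Bsp Omega A"
  obtains sq where "\<And>n. simple_fn Omega A (sq n)" "\<And>n w. w \<in> Omega \<Longrightarrow> \<bar>f w - sq n w\<bar> \<le> 1 / real (Suc n)"
proof -
  have "\<forall>n. \<exists>s. simple_fn Omega A s \<and> (\<forall>w\<in>Omega. \<bar>f w - s w\<bar> < 1 / real (Suc n))"
    using assms unfolding Bsp_def by simp
  then obtain sq where "\<forall>n. simple_fn Omega A (sq n) \<and> (\<forall>w\<in>Omega. \<bar>f w - sq n w\<bar> < 1 / real (Suc n))"
    by metis
  then show ?thesis using that by (meson less_imp_le)
qed

lemma SI_close:
  assumes F: "is_field Omega A" and fa: "fin_add A mu" and Bd: "\<And>E. E \<in> A \<Longrightarrow> \<bar>mu E\<bar> \<le> B"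
    and s: "simple_fn Omega A s" "simple_fn Omega A s'"
    and a: "\<And>w. w \<in> Omega \<Longrightarrow> \<bar>f w - s w\<bar> \<le> a" and b: "\<And>w. w \<in> Omega \<Longrightarrow> \<bar>f w - s' w\<bar> \<le> b"
    and ab: "0 \<le> a" "0 \<le> b"
  shows "\<bar>simple_integral Omega mu s - simple_integral Omega mu s'\<bar> \<le> 2 * B * (a + b)"
proof -
  have r1: "\<bar>s w - s' w\<bar> \<le> a + b" if "w \<in> Omega" for w using a[OF that] b[OF that] by linarith
  have r2: "0 \<le> a + b" using ab by linarith
  have "\<bar>simple_integral Omega mu (\<lambda>w. s w - s' w)\<bar> \<le> 2 * B * (a + b)"
    by (rule SI_bound[OF F fa Bd simple_diff[OF F s] r1 r2])
  then show ?thesis using SI_diff[OF F fa s] by simp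
qed

lemma inv_suc_lim: "(\<lambda>n. C * (1 / real (Suc n))) \<longlonglongrightarrow> 0"
proof -
  have "(\<lambda>n. 1 / real (Suc n)) \<longlonglongrightarrow> 0" using LIMSEQ_inverse_real_of_nat by (simp add: inverse_eq_divide)
  then show ?thesis using tendsto_mult_right_zero by blast
qed

lemma integ_seq:
  assumes F: "is_field Omega A" and fa: "fin_add A mu" and Bd: "\<And>E. E \<in> A \<Longrightarrow> \<bar>mu E\<bar> \<le> B"
    and f: "f \<in> Bsp Omega A"
  obtains sq where "\<And>n. simple_fn Omega A (sq n)" "\<And>n w. w \<in> Omega \<Longrightarrow> \<bar>f w - sq n w\<bar> \<le> 1 / real (Suc n)"
    "(\<lambda>n. simple_integral Omega mu (sq n)) \<longlonglongrightarrow> integ Omega A mu f"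
proof -
  have B0: "0 \<le> B" by (rule bound_nonneg[OF F Bd])
  obtain sq where sq: "\<And>n. simple_fn Omega A (sq n)" "\<And>n w. w \<in> Omega \<Longrightarrow> \<bar>f w - sq n w\<bar> \<le> 1 / real (Suc n)"
    using Bsp_seq[OF f] by blast
  let ?a = "\<lambda>n. simple_integral Omega mu (sq n)"
  have cl: "\<bar>?a n - ?a m\<bar> \<le> 2 * B * (1 / real (Suc n) + 1 / real (Suc m))" for n m
    by (rule SI_close[OF F fa Bd sq(1) sq(1) sq(2) sq(2)]) simp_all
  have "Cauchy ?a"
  proof (rule CauchyI)
    fix e :: real assume e: "0 < e"
    obtain M :: nat where M: "4 * B / e < real M" using reals_Archimedean2 by blast
    have "4 * B < e * real (Suc M)" using M e by (simp add: field_simps)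
    show "\<exists>M. \<forall>m\<ge>M. \<forall>n\<ge>M. norm (?a m - ?a n) < e"
    proof (intro exI allI impI)
      fix m n assume mn: "M \<le> m" "M \<le> n"
      have i1: "1 / real (Suc m) \<le> 1 / real (Suc M)" "1 / real (Suc n) \<le> 1 / real (Suc M)"
        using mn by (simp_all add: frac_le)
      have "norm (?a m - ?a n) \<le> 2 * B * (1 / real (Suc m) + 1 / real (Suc n))" using cl by simp
      also have "\<dots> \<le> 2 * B * (2 / real (Suc M))" using i1 B0 by (intro mult_left_mono) simp_all
      also have "\<dots> < e" using \<open>4 * B < e * real (Suc M)\<close> by (simp add: field_simps)
      finally show "norm (?a m - ?a n) < e" .
    qed
  qed
  then obtain L where L: "?a \<longlonglongrightarrow> L" using Cauchy_convergent_iff convergent_def by blast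
  have "integ Omega A mu f = L"
    unfolding integ_def
  proof (rule the_equality)
    show "\<exists>s. (\<forall>n. simple_fn Omega A (s n)) \<and> (\<forall>n. \<forall>w\<in>Omega. \<bar>f w - s n w\<bar> \<le> 1 / real (Suc n)) \<and>
        (\<lambda>n. simple_integral Omega mu (s n)) \<longlonglongrightarrow> L"
      using sq L by blast
  next
    fix r assume "\<exists>s. (\<forall>n. simple_fn Omega A (s n)) \<and> (\<forall>n. \<forall>w\<in>Omega. \<bar>f w - s n w\<bar> \<le> 1 / real (Suc n)) \<and>
        (\<lambda>n. simple_integral Omega mu (s n)) \<longlonglongrightarrow> r"
    then obtain s where s: "\<And>n. simple_fn Omega A (s n)" "\<And>n w. w \<in> Omega \<Longrightarrow> \<bar>f w - s n w\<bar> \<le> 1 / real (Suc n)"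
      "(\<lambda>n. simple_integral Omega mu (s n)) \<longlonglongrightarrow> r" by blast
    have d: "(\<lambda>n. simple_integral Omega mu (s n) - ?a n) \<longlonglongrightarrow> r - L" using s(3) L by (rule tendsto_diff)
    have "(\<lambda>n. simple_integral Omega mu (s n) - ?a n) \<longlonglongrightarrow> 0"
    proof (rule tendsto_0_le[OF inv_suc_lim[of 1]])
      show "\<forall>\<^sub>F n in sequentially. norm (simple_integral Omega mu (s n) - ?a n) \<le> norm (1 * (1 / real (Suc n))) * (4 * B)"
      proof (rule always_eventually, rule allI)
        fix n
        have "\<bar>simple_integral Omega mu (s n) - ?a n\<bar> \<le> 2 * B * (1 / real (Suc n) + 1 / real (Suc n))"
          by (rule SI_close[OF F fa Bd s(1) sq(1) s(2) sq(2)]) simp_all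
        then show "norm (simple_integral Omega mu (s n) - ?a n) \<le> norm (1 * (1 / real (Suc n))) * (4 * B)" by simp
      qed
    qed
    then show "r = L" using d LIMSEQ_unique by fastforce
  qed
  then show ?thesis using L by (intro that[OF sq(1) sq(2)]) simp_all
qed

lemma integ_approx:
  assumes F: "is_field Omega A" and fa: "fin_add A mu" and Bd: "\<And>E. E \<in> A \<Longrightarrow> \<bar>mu E\<bar> \<le> B"
    and f: "f \<in> Bsp Omega A" and s: "simple_fn Omega A s" and e: "\<And>w. w \<in> Omega \<Longrightarrow> \<bar>f w - s w\<bar> \<le> e" "0 \<le> e"
  shows "\<bar>integ Omega A mu f - simple_integral Omega mu s\<bar> \<le> 2 * B * e"
proof -
  obtain sq where sq: "\<And>n. simple_fn Omega A (sq n)" "\<And>n w. w \<in> Omega \<Longrightarrow> \<bar>f w - sq n w\<bar> \<le> 1 / real (Suc n)"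
    "(\<lambda>n. simple_integral Omega mu (sq n)) \<longlonglongrightarrow> integ Omega A mu f"
    using integ_seq[OF F fa Bd f] by blast
  have l1: "(\<lambda>n. \<bar>simple_integral Omega mu (sq n) - simple_integral Omega mu s\<bar>) \<longlonglongrightarrow> \<bar>integ Omega A mu f - simple_integral Omega mu s\<bar>"
    by (intro tendsto_intros sq(3))
  have l2: "(\<lambda>n. 2 * B * e + 2 * B * (1 / real (Suc n))) \<longlonglongrightarrow> 2 * B * e + 0"
    by (intro tendsto_intros inv_suc_lim)
  show ?thesis
  proof (rule LIMSEQ_le[OF l1, of _ "2 * B * e + 0", simplified])
    show "(\<lambda>n. 2 * B * e + 2 * B * (1 / real (Suc n))) \<longlonglongrightarrow> 2 * B * e" using l2 by simp
    show "\<exists>N. \<forall>n\<ge>N. \<bar>simple_integral Omega mu (sq n) - simple_integral Omega mu s\<bar> \<le> 2 * B * e + 2 * B * (1 / real (Suc n))"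
    proof (intro exI allI impI)
      fix n :: nat
      have "\<bar>simple_integral Omega mu (sq n) - simple_integral Omega mu s\<bar> \<le> 2 * B * (1 / real (Suc n) + e)"
        by (rule SI_close[OF F fa Bd sq(1) s sq(2) e(1)]) (simp_all add: e(2))
      then show "\<bar>simple_integral Omega mu (sq n) - simple_integral Omega mu s\<bar> \<le> 2 * B * e + 2 * B * (1 / real (Suc n))"
        by (simp add: algebra_simps)
    qed
  qed
qed

lemma Bsp_simple: assumes "simple_fn Omega A s" shows "s \<in> Bsp Omega A"
proof -
  have "\<forall>e>0. \<exists>s'. simple_fn Omega A s' \<and> (\<forall>w\<in>Omega. \<bar>s w - s' w\<bar> < e)"
    using assms by (intro allI impI exI[of _ s]) simp
  then show ?thesis unfolding Bsp_def by blast
qed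

lemma Bsp_approx: assumes "f \<in> Bsp Omega A" "0 < e"
  obtains s where "simple_fn Omega A s" "\<And>w. w \<in> Omega \<Longrightarrow> \<bar>f w - s w\<bar> < e"
proof -
  have "\<exists>s. simple_fn Omega A s \<and> (\<forall>w\<in>Omega. \<bar>f w - s w\<bar> < e)"
    using assms unfolding Bsp_def by simp
  then show ?thesis using that by blast
qed

lemma tri3: fixes x y z u v :: real shows "\<bar>x - (y + z)\<bar> \<le> \<bar>x - (u + v)\<bar> + \<bar>y - u\<bar> + \<bar>z - v\<bar>"
  by linarith

lemma integ_simple:
  assumes F: "is_field Omega A" and fa: "fin_add A mu" and Bd: "\<And>E. E \<in> A \<Longrightarrow> \<bar>mu E\<bar> \<le> B"
    and s: "simple_fn Omega A s"
  shows "integ Omega A mu s = simple_integral Omega mu s"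
  using integ_approx[OF F fa Bd Bsp_simple[OF s] s, of 0] by simp

lemma Bsp_add: assumes F: "is_field Omega A" "f \<in> Bsp Omega A" "g \<in> Bsp Omega A"
  shows "(\<lambda>w. f w + g w) \<in> Bsp Omega A"
  unfolding Bsp_def
proof (intro CollectI allI impI)
  fix e :: real assume e: "0 < e"
  have e2: "0 < e/2" using e by simp
  obtain s where s: "simple_fn Omega A s" "\<And>w. w \<in> Omega \<Longrightarrow> \<bar>f w - s w\<bar> < e/2"
    using Bsp_approx[OF assms(2) e2] by blast
  obtain s' where s': "simple_fn Omega A s'" "\<And>w. w \<in> Omega \<Longrightarrow> \<bar>g w - s' w\<bar> < e/2"
    using Bsp_approx[OF assms(3) e2] by blast
  show "\<exists>s. simple_fn Omega A s \<and> (\<forall>w\<in>Omega. \<bar>f w + g w - s w\<bar> < e)"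
  proof (intro exI conjI ballI)
    show "simple_fn Omega A (\<lambda>w. s w + s' w)" by (rule simple_add[OF F(1) s(1) s'(1)])
    fix w assume "w \<in> Omega"
    then have "\<bar>f w - s w\<bar> < e/2" "\<bar>g w - s' w\<bar> < e/2" using s(2) s'(2) by simp_all
    then show "\<bar>f w + g w - (s w + s' w)\<bar> < e" by linarith
  qed
qed

lemma integ_add:
  assumes F: "is_field Omega A" and fa: "fin_add A mu" and Bd: "\<And>E. E \<in> A \<Longrightarrow> \<bar>mu E\<bar> \<le> B"
    and f: "f \<in> Bsp Omega A" and g: "g \<in> Bsp Omega A"
  shows "integ Omega A mu (\<lambda>w. f w + g w) = integ Omega A mu f + integ Omega A mu g"
proof -
  have B0: "0 \<le> B" by (rule bound_nonneg[OF F Bd])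
  have "integ Omega A mu (\<lambda>w. f w + g w) - (integ Omega A mu f + integ Omega A mu g) = 0"
  proof (rule small_zero[of "8 * B"])
    show "0 \<le> 8 * B" using B0 by simp
    fix e :: real assume e: "0 < e"
    obtain s where s: "simple_fn Omega A s" "\<And>w. w \<in> Omega \<Longrightarrow> \<bar>f w - s w\<bar> < e"
      using Bsp_approx[OF f e] by blast
    obtain s' where s': "simple_fn Omega A s'" "\<And>w. w \<in> Omega \<Longrightarrow> \<bar>g w - s' w\<bar> < e"
      using Bsp_approx[OF g e] by blast
    have 1: "\<bar>integ Omega A mu f - simple_integral Omega mu s\<bar> \<le> 2 * B * e"
      by (rule integ_approx[OF F fa Bd f s(1)]) (use s(2) e in \<open>simp_all add: less_imp_le\<close>)
    have 2: "\<bar>integ Omega A mu g - simple_integral Omega mu s'\<bar> \<le> 2 * B * e"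
      by (rule integ_approx[OF F fa Bd g s'(1)]) (use s'(2) e in \<open>simp_all add: less_imp_le\<close>)
    have 3: "\<bar>integ Omega A mu (\<lambda>w. f w + g w) - simple_integral Omega mu (\<lambda>w. s w + s' w)\<bar> \<le> 2 * B * (2 * e)"
    proof (rule integ_approx[OF F fa Bd Bsp_add[OF F f g] simple_add[OF F s(1) s'(1)]])
      fix w assume "w \<in> Omega"
      then have "\<bar>f w - s w\<bar> < e" "\<bar>g w - s' w\<bar> < e" using s(2) s'(2) by simp_all
      then show "\<bar>f w + g w - (s w + s' w)\<bar> \<le> 2 * e" by linarith
    next
      show "0 \<le> 2 * e" using e by simp
    qed
    have 4: "simple_integral Omega mu (\<lambda>w. s w + s' w) = simple_integral Omega mu s + simple_integral Omega mu s'"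
      by (rule SI_add[OF F fa s(1) s'(1)])
    show "\<bar>integ Omega A mu (\<lambda>w. f w + g w) - (integ Omega A mu f + integ Omega A mu g)\<bar> \<le> 8 * B * e"
    proof -
      have "\<bar>integ Omega A mu (\<lambda>w. f w + g w) - (integ Omega A mu f + integ Omega A mu g)\<bar>
        \<le> \<bar>integ Omega A mu (\<lambda>w. f w + g w) - simple_integral Omega mu (\<lambda>w. s w + s' w)\<bar>
          + \<bar>integ Omega A mu f - simple_integral Omega mu s\<bar> + \<bar>integ Omega A mu g - simple_integral Omega mu s'\<bar>"
        unfolding 4 by (rule tri3)
      then show ?thesis using 1 2 3 by simp
    qed
  qed
  then show ?thesis by simp
qed

lemma Bsp_sum: assumes F: "is_field Omega A"
  shows "finite I \<Longrightarrow> (\<And>i. i \<in> I \<Longrightarrow> f i \<in> Bsp Omega A) \<Longrightarrow> (\<lambda>w. \<Sum>i\<in>I. f i w) \<in> Bsp Omega A"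
proof (induction I rule: finite_induct)
  case empty then show ?case using Bsp_simple[OF simple_const[OF F, of 0]] by simp
next
  case (insert x I) then show ?case using Bsp_add[OF F, of "f x" "\<lambda>w. \<Sum>i\<in>I. f i w"] by simp
qed

lemma integ_sum:
  assumes F: "is_field Omega A" and fa: "fin_add A mu" and Bd: "\<And>E. E \<in> A \<Longrightarrow> \<bar>mu E\<bar> \<le> B"
  shows "finite I \<Longrightarrow> (\<And>i. i \<in> I \<Longrightarrow> f i \<in> Bsp Omega A) \<Longrightarrow>
    integ Omega A mu (\<lambda>w. \<Sum>i\<in>I. f i w) = (\<Sum>i\<in>I. integ Omega A mu (f i))"
proof (induction I rule: finite_induct)
  case empty
  have "integ Omega A mu (\<lambda>w. 0) = simple_integral Omega mu (\<lambda>w. 0)"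
    by (rule integ_simple[OF F fa Bd simple_const[OF F]])
  then show ?case using SI_const[OF F fa, of 0] by simp
next
  case (insert x I)
  have "integ Omega A mu (\<lambda>w. \<Sum>i\<in>insert x I. f i w) = integ Omega A mu (\<lambda>w. f x w + (\<Sum>i\<in>I. f i w))"
    using insert(1,2) by simp
  also have "\<dots> = integ Omega A mu (f x) + integ Omega A mu (\<lambda>w. \<Sum>i\<in>I. f i w)"
    by (rule integ_add[OF F fa Bd]) (use insert.prems insert.hyps Bsp_sum[OF F, of I f] in simp_all)
  finally show ?case using insert by simp
qed

lemma SI_sum:
  assumes F: "is_field Omega A" and fa: "fin_add A mu"
  shows "finite K \<Longrightarrow> (\<And>k. k \<in> K \<Longrightarrow> simple_fn Omega A (s k)) \<Longrightarrow>
    simple_integral Omega mu (\<lambda>w. \<Sum>k\<in>K. s k w) = (\<Sum>k\<in>K. simple_integral Omega mu (s k))"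
proof (induction K rule: finite_induct)
  case empty then show ?case using SI_const[OF F fa, of 0] by simp
next
  case (insert x K)
  have "simple_integral Omega mu (\<lambda>w. \<Sum>k\<in>insert x K. s k w) = simple_integral Omega mu (\<lambda>w. s x w + (\<Sum>k\<in>K. s k w))"
    using insert(1,2) by simp
  also have "\<dots> = simple_integral Omega mu (s x) + simple_integral Omega mu (\<lambda>w. \<Sum>k\<in>K. s k w)"
    by (rule SI_add[OF F fa]) (use insert.prems insert.hyps simple_sum[OF F, of K s] in simp_all)
  finally show ?case using insert by simp
qed

definition lcomb :: "'w set set \<Rightarrow> ('w set \<Rightarrow> real) \<Rightarrow> real \<Rightarrow> 'w \<Rightarrow> real" where
  "lcomb EE a c = (\<lambda>w. (\<Sum>E\<in>EE. a E * indicator E w) - c)"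

lemma simple_lcomb: assumes F: "is_field Omega A" "finite EE" "EE \<subseteq> A"
  shows "simple_fn Omega A (lcomb EE a c)"
  unfolding lcomb_def
  by (rule simple_diff[OF F(1) simple_sum[OF F(1) F(2)] simple_const[OF F(1)]])
     (use F simple_scale simple_ind in blast)

lemma SI_lcomb: assumes F: "is_field Omega A" "finite EE" "EE \<subseteq> A" and fa: "fin_add A mu"
  shows "simple_integral Omega mu (lcomb EE a c) = (\<Sum>E\<in>EE. a E * mu E) - c * mu Omega"
proof -
  have si: "simple_fn Omega A (\<lambda>w. a E * indicator E w)" if "E \<in> EE" for E
    using F simple_scale simple_ind that by blast
  have "simple_integral Omega mu (lcomb EE a c) =
      simple_integral Omega mu (\<lambda>w. \<Sum>E\<in>EE. a E * indicator E w) - simple_integral Omega mu (\<lambda>w. c)"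
    unfolding lcomb_def by (rule SI_diff[OF F(1) fa simple_sum[OF F(1) F(2)] simple_const[OF F(1)]]) (rule si)
  also have "simple_integral Omega mu (\<lambda>w. \<Sum>E\<in>EE. a E * indicator E w) = (\<Sum>E\<in>EE. simple_integral Omega mu (\<lambda>w. a E * indicator E w))"
    by (rule SI_sum[OF F(1) fa F(2)]) (rule si)
  also have "\<dots> = (\<Sum>E\<in>EE. a E * mu E)"
  proof (rule sum.cong[OF refl])
    fix E assume "E \<in> EE"
    then have E: "E \<in> A" using F by blast
    show "simple_integral Omega mu (\<lambda>w. a E * indicator E w) = a E * mu E"
      using SI_scale[OF F(1) fa simple_ind[OF F(1) E]] SI_ind[OF F(1) fa E] by simp
  qed
  finally show ?thesis using SI_const[OF F(1) fa] by simp
qed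

lemma pba_fa: "P \<in> pba Omega A \<Longrightarrow> fin_add A P" unfolding pba_def by blast
lemma pba_bd: "is_field Omega A \<Longrightarrow> P \<in> pba Omega A \<Longrightarrow> E \<in> A \<Longrightarrow> \<bar>P E\<bar> \<le> 1"
  using pba_ba(2) by fastforce
lemma pba_top: "P \<in> pba Omega A \<Longrightarrow> P Omega = 1" unfolding pba_def by blast

lemma ba_bd: assumes "mu \<in> ba Omega A" obtains B where "\<And>E. E \<in> A \<Longrightarrow> \<bar>mu E\<bar> \<le> B"
  using assms unfolding ba_def by blast
lemma ba_fa: "mu \<in> ba Omega A \<Longrightarrow> fin_add A mu" unfolding ba_def by blast

lemma integ_lcomb_pba: assumes F: "is_field Omega A" "finite EE" "EE \<subseteq> A" and P: "P \<in> pba Omega A"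
  shows "integ Omega A P (lcomb EE a c) = (\<Sum>E\<in>EE. a E * P E) - c"
  using integ_simple[OF F(1) pba_fa[OF P] pba_bd[OF F(1) P] simple_lcomb[OF F]]
    SI_lcomb[OF F pba_fa[OF P]] pba_top[OF P] by simp

lemma mix_pba:
  assumes F: "is_field Omega A" and K: "finite K" "\<And>k. k \<in> K \<Longrightarrow> 0 \<le> c k \<and> m k \<in> pba Omega A" "sum c K = 1"
  shows "(\<lambda>E. \<Sum>k\<in>K. c k * m k E) \<in> pba Omega A"
  unfolding pba_def
proof (intro CollectI conjI ballI allI impI)
  show "fin_add A (\<lambda>E. \<Sum>k\<in>K. c k * m k E)"
    unfolding fin_add_def
  proof (intro ballI impI)
    fix E G assume "E \<in> A" "G \<in> A" "E \<inter> G = {}"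
    then have "m k (E \<union> G) = m k E + m k G" if "k \<in> K" for k
      using K(2)[OF that] unfolding pba_def fin_add_def by blast
    then show "(\<Sum>k\<in>K. c k * m k (E \<union> G)) = (\<Sum>k\<in>K. c k * m k E) + (\<Sum>k\<in>K. c k * m k G)"
      by (simp add: distrib_left sum.distrib)
  qed
  fix E
  show "E \<in> A \<Longrightarrow> 0 \<le> (\<Sum>k\<in>K. c k * m k E)"
    using K(2) unfolding pba_def by (auto intro!: sum_nonneg)
  show "E \<notin> A \<Longrightarrow> (\<Sum>k\<in>K. c k * m k E) = 0"
    using K(2) unfolding pba_def by simp
next
  have "(\<Sum>k\<in>K. c k * m k Omega) = (\<Sum>k\<in>K. c k)" using K(2) unfolding pba_def by simp
  then show "(\<Sum>k\<in>K. c k * m k Omega) = 1" using K(3) by simp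
qed

lemma integ_mix:
  assumes F: "is_field Omega A" and K: "finite K" "\<And>k. k \<in> K \<Longrightarrow> 0 \<le> c k \<and> m k \<in> pba Omega A" "sum c K = 1"
    and f: "f \<in> Bsp Omega A"
  shows "integ Omega A (\<lambda>E. \<Sum>k\<in>K. c k * m k E) f = (\<Sum>k\<in>K. c k * integ Omega A (m k) f)"
proof -
  let ?nu = "\<lambda>E. \<Sum>k\<in>K. c k * m k E"
  have nu: "?nu \<in> pba Omega A" by (rule mix_pba[OF F K])
  have "integ Omega A ?nu f - (\<Sum>k\<in>K. c k * integ Omega A (m k) f) = 0"
  proof (rule small_zero[of 4])
    fix e :: real assume e: "0 < e"
    obtain s where s: "simple_fn Omega A s" "\<And>w. w \<in> Omega \<Longrightarrow> \<bar>f w - s w\<bar> < e"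
      using Bsp_approx[OF f e] by blast
    have se: "\<And>w. w \<in> Omega \<Longrightarrow> \<bar>f w - s w\<bar> \<le> e" using s(2) less_imp_le by blast
    have 1: "\<bar>integ Omega A ?nu f - simple_integral Omega ?nu s\<bar> \<le> 2 * 1 * e"
      by (rule integ_approx[OF F pba_fa[OF nu] pba_bd[OF F nu] f s(1) se less_imp_le[OF e]])
    have 2: "\<bar>integ Omega A (m k) f - simple_integral Omega (m k) s\<bar> \<le> 2 * 1 * e" if "k \<in> K" for k
    proof -
      have mk: "m k \<in> pba Omega A" using K(2)[OF that] by blast
      show ?thesis by (rule integ_approx[OF F pba_fa[OF mk] pba_bd[OF F mk] f s(1) se less_imp_le[OF e]])
    qed
    have 3: "simple_integral Omega ?nu s = (\<Sum>k\<in>K. c k * simple_integral Omega (m k) s)" by (rule SI_mix)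
    have "\<bar>(\<Sum>k\<in>K. c k * simple_integral Omega (m k) s) - (\<Sum>k\<in>K. c k * integ Omega A (m k) f)\<bar>
        = \<bar>\<Sum>k\<in>K. c k * (simple_integral Omega (m k) s - integ Omega A (m k) f)\<bar>"
      by (simp add: sum_subtractf right_diff_distrib)
    also have "\<dots> \<le> (\<Sum>k\<in>K. \<bar>c k * (simple_integral Omega (m k) s - integ Omega A (m k) f)\<bar>)" by (rule sum_abs)
    also have "\<dots> \<le> (\<Sum>k\<in>K. c k * (2 * e))"
    proof (rule sum_mono)
      fix k assume k: "k \<in> K"
      have "\<bar>simple_integral Omega (m k) s - integ Omega A (m k) f\<bar> \<le> 2 * e" using 2[OF k] by simp
      then show "\<bar>c k * (simple_integral Omega (m k) s - integ Omega A (m k) f)\<bar> \<le> c k * (2 * e)"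
        using K(2)[OF k] by (simp add: abs_mult mult_left_mono)
    qed
    also have "\<dots> = 2 * e" using K(3) by (simp add: sum_distrib_right[symmetric])
    finally show "\<bar>integ Omega A ?nu f - (\<Sum>k\<in>K. c k * integ Omega A (m k) f)\<bar> \<le> 4 * e"
      using 1 3 by linarith
  qed simp
  then show ?thesis by simp
qed

lemma ts_field: "type_space N Omega A M t \<Longrightarrow> is_field Omega A"
  unfolding type_space_def by blast

lemma ts_belief: "type_space N Omega A M t \<Longrightarrow> i \<in> N \<Longrightarrow> w \<in> Omega \<Longrightarrow> belief A t i w \<in> pba Omega A"
  unfolding type_space_def by blast

lemma ts_top: assumes "type_space N Omega A M t" "i \<in> N" "w \<in> Omega" shows "t i w Omega = 1"
proof -
  have "is_field Omega (M i)" "\<forall>E\<in>M i. \<forall>w\<in>E. t i w E = 1" using assms unfolding type_space_def by blast+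
  then show ?thesis using field_top assms(3) by blast
qed

lemma pba_in_ba: "is_field Omega A \<Longrightarrow> P \<in> pba Omega A \<Longrightarrow> P \<in> ba Omega A" by (rule pba_ba(1))

lemma conv_pba:
  assumes F: "is_field Omega A" and S: "S \<subseteq> pba Omega A" and nu: "nu \<in> conv_sf S"
  shows "nu \<in> pba Omega A"
proof -
  obtain K :: "nat set" and c m where K: "finite K" "\<forall>k\<in>K. c k \<ge> 0 \<and> m k \<in> S" "sum c K = 1"
    "nu = (\<lambda>E. \<Sum>k\<in>K. c k * m k E)" using nu unfolding conv_sf_def by blast
  show ?thesis unfolding K(4) by (rule mix_pba[OF F K(1) _ K(3)]) (use K(2) S in blast)
qed

lemma conv_integ_nonneg:
  assumes F: "is_field Omega A" and S: "S \<subseteq> pba Omega A" and nu: "nu \<in> conv_sf S"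
    and f: "f \<in> Bsp Omega A" and pos: "\<And>m. m \<in> S \<Longrightarrow> 0 \<le> integ Omega A m f"
  shows "0 \<le> integ Omega A nu f"
proof -
  obtain K :: "nat set" and c m where K: "finite K" "\<forall>k\<in>K. c k \<ge> 0 \<and> m k \<in> S" "sum c K = 1"
    "nu = (\<lambda>E. \<Sum>k\<in>K. c k * m k E)" using nu unfolding conv_sf_def by blast
  have K2: "\<And>k. k \<in> K \<Longrightarrow> 0 \<le> c k \<and> m k \<in> pba Omega A" using K(2) S by blast
  have "integ Omega A nu f = (\<Sum>k\<in>K. c k * integ Omega A (m k) f)"
    unfolding K(4) by (rule integ_mix[OF F K(1) K2 K(3) f])
  also have "\<dots> \<ge> 0" by (rule sum_nonneg) (use K(2) pos in simp)
  finally show ?thesis .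
qed

lemma wclosure_approx:
  assumes "mu \<in> wstar_closure Omega A S" "g \<in> Bsp Omega A" "0 < e"
  obtains nu where "nu \<in> S" "\<bar>integ Omega A mu g - integ Omega A nu g\<bar> < e"
proof -
  have "\<forall>F e. finite F \<and> F \<subseteq> Bsp Omega A \<and> e > 0 \<longrightarrow>
      (\<exists>nu\<in>S. \<forall>f\<in>F. \<bar>integ Omega A mu f - integ Omega A nu f\<bar> < e)"
    using assms(1) unfolding wstar_closure_def by blast
  then have "\<exists>nu\<in>S. \<forall>f\<in>{g}. \<bar>integ Omega A mu f - integ Omega A nu f\<bar> < e"
    using assms(2,3) by (simp only: finite.emptyI finite_insert empty_subsetI insert_subset simp_thms)
  then show ?thesis using that by blast
qed

lemma wclosure_ba: "mu \<in> wstar_closure Omega A S \<Longrightarrow> mu \<in> ba Omega A"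
  unfolding wstar_closure_def by blast

lemma integ_ind_ba:
  assumes F: "is_field Omega A" and mu: "mu \<in> ba Omega A" and E: "E \<in> A"
  shows "integ Omega A mu (indicator E) = mu E"
proof -
  obtain B where B: "\<And>E. E \<in> A \<Longrightarrow> \<bar>mu E\<bar> \<le> B" using ba_bd[OF mu] by blast
  show ?thesis using integ_simple[OF F ba_fa[OF mu] B simple_ind[OF F E]] SI_ind[OF F ba_fa[OF mu] E] by simp
qed

lemma wclosure_pba:
  assumes F: "is_field Omega A" and S: "S \<subseteq> pba Omega A" and mu: "mu \<in> wstar_closure Omega A S"
  shows "mu \<in> pba Omega A"
proof -
  have mb: "mu \<in> ba Omega A" by (rule wclosure_ba[OF mu])
  have close: "\<exists>nu\<in>S. \<bar>mu E - nu E\<bar> < e" if E: "E \<in> A" and e: "0 < e" for E e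
  proof -
    obtain nu where nu: "nu \<in> S" "\<bar>integ Omega A mu (indicator E) - integ Omega A nu (indicator E)\<bar> < e"
      using wclosure_approx[OF mu Bsp_simple[OF simple_ind[OF F E]] e] by blast
    have "nu \<in> ba Omega A" using nu(1) S pba_in_ba[OF F] by blast
    then have "integ Omega A nu (indicator E) = nu E" by (rule integ_ind_ba[OF F _ E])
    then have "\<bar>mu E - nu E\<bar> < e" using nu(2) integ_ind_ba[OF F mb E] by simp
    then show ?thesis using nu(1) by blast
  qed
  have nn: "0 \<le> mu E" if E: "E \<in> A" for E
  proof (rule ccontr)
    assume "\<not> 0 \<le> mu E"
    then have "0 < - mu E" by simp
    then obtain nu where "nu \<in> S" "\<bar>mu E - nu E\<bar> < - mu E" using close[OF E] by blast
    moreover have "0 \<le> nu E" using \<open>nu \<in> S\<close> S E unfolding pba_def by blast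
    ultimately show False by linarith
  qed
  have one: "mu Omega = 1"
  proof (rule ccontr)
    assume "mu Omega \<noteq> 1"
    then have "0 < \<bar>mu Omega - 1\<bar>" by simp
    then obtain nu where "nu \<in> S" "\<bar>mu Omega - nu Omega\<bar> < \<bar>mu Omega - 1\<bar>" using close[OF field_top[OF F]] by blast
    moreover have "nu Omega = 1" using \<open>nu \<in> S\<close> S unfolding pba_def by blast
    ultimately show False by simp
  qed
  show ?thesis using mb nn one unfolding ba_def pba_def by blast
qed

lemma conv_self: assumes "m \<in> S" shows "m \<in> conv_sf S"
  unfolding conv_sf_def
  by (rule CollectI, rule exI[of _ "{0::nat}"], rule exI[of _ "\<lambda>_. 1"], rule exI[of _ "\<lambda>_. m"]) (use assms in simp)

lemma conv_sub_wclosure: assumes F: "is_field Omega A" "S \<subseteq> pba Omega A" "m \<in> S"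
  shows "m \<in> wstar_closure Omega A S"
proof -
  have "m \<in> ba Omega A" using assms pba_in_ba[OF F(1)] by blast
  moreover have "\<forall>F e. finite F \<and> F \<subseteq> Bsp Omega A \<and> e > 0 \<longrightarrow>
      (\<exists>nu\<in>S. \<forall>f\<in>F. \<bar>integ Omega A m f - integ Omega A nu f\<bar> < e)"
    using assms(3) by (intro allI impI bexI[of _ m]) simp_all
  ultimately show ?thesis unfolding wstar_closure_def by blast
qed

lemma beliefs_sub: assumes "type_space N Omega A M t" "i \<in> N" shows "belief A t i ` Omega \<subseteq> pba Omega A"
  using ts_belief[OF assms] by blast

lemma beliefs_pba: assumes "type_space N Omega A M t" "i \<in> N" shows "conv_sf (belief A t i ` Omega) \<subseteq> pba Omega A"
  using conv_pba[OF ts_field[OF assms(1)] beliefs_sub[OF assms]] by blast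

lemma Pi_pba: assumes "type_space N Omega A M t" "i \<in> N" shows "Pi_set Omega A t i \<subseteq> pba Omega A"
  unfolding Pi_set_def using wclosure_pba[OF ts_field[OF assms(1)] beliefs_pba[OF assms]] by blast

lemma belief_Pi: assumes "type_space N Omega A M t" "i \<in> N" "w \<in> Omega"
  shows "belief A t i w \<in> Pi_set Omega A t i"
  unfolding Pi_set_def
  by (rule conv_sub_wclosure[OF ts_field[OF assms(1)] beliefs_pba[OF assms(1,2)]])
     (rule conv_self, use assms(3) in blast)

lemma Pi_nonneg:
  assumes TS: "type_space N Omega A M t" and i: "i \<in> N" and mu: "mu \<in> Pi_set Omega A t i"
    and f: "f \<in> Bsp Omega A" and pos: "\<And>w. w \<in> Omega \<Longrightarrow> 0 \<le> integ Omega A (belief A t i w) f"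
  shows "0 \<le> integ Omega A mu f"
proof (rule ccontr)
  assume "\<not> 0 \<le> integ Omega A mu f"
  then have e: "0 < - integ Omega A mu f" by simp
  obtain nu where nu: "nu \<in> conv_sf (belief A t i ` Omega)" "\<bar>integ Omega A mu f - integ Omega A nu f\<bar> < - integ Omega A mu f"
    using wclosure_approx[OF mu[unfolded Pi_set_def] f e] by blast
  have "0 \<le> integ Omega A nu f"
    by (rule conv_integ_nonneg[OF ts_field[OF TS] _ nu(1) f]) (use beliefs_sub[OF TS i] pos in blast)+
  then show False using nu(2) by linarith
qed

lemma compact_funbox:
  fixes S :: "'b::topological_space set"
  assumes "compact S"
  shows "compact {f::'a \<Rightarrow> 'b. \<forall>x. f x \<in> S}"
proof -
  have e: "{f::'a \<Rightarrow> 'b. \<forall>x. f x \<in> S} = PiE UNIV (\<lambda>_. S)" by (auto simp: PiE_def Pi_def)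
  have "compactin (product_topology (\<lambda>i::'a. euclidean) UNIV) (PiE UNIV (\<lambda>_. S))"
    using assms by (simp add: compactin_PiE)
  then show ?thesis unfolding e euclidean_product_topology compactin_euclidean_iff .
qed

lemma cont_coord [continuous_intros]: "continuous_on S (\<lambda>\<nu>::'a \<Rightarrow> 'b::topological_space. \<nu> x)"
  by (rule continuous_on_subset[OF continuous_on_product_coordinates subset_UNIV])

lemma SI_cont: "continuous_on S (\<lambda>\<nu>. simple_integral Omega \<nu> s)"
  unfolding simple_integral_def by (intro continuous_on_sum continuous_on_mult continuous_on_const cont_coord)

lemma closedI_pts:
  assumes "\<And>x. (\<And>T. open T \<Longrightarrow> x \<in> T \<Longrightarrow> \<exists>y\<in>S. y \<in> T) \<Longrightarrow> x \<in> S"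
  shows "closed S"
  unfolding closed_limpt islimpt_def using assms by blast

lemma open_Collect_const': "open {x. P}" by (cases P) auto

lemma pba_closed: "closed (pba Omega A)"
proof -
  have e: "pba Omega A = {P. (\<forall>E. \<forall>G. E \<in> A \<and> G \<in> A \<and> E \<inter> G = {} \<longrightarrow> P (E \<union> G) = P E + P G) \<and>
     (\<forall>E. E \<in> A \<longrightarrow> 0 \<le> P E) \<and> P Omega = 1 \<and> (\<forall>E. E \<notin> A \<longrightarrow> P E = 0)}"
    unfolding pba_def fin_add_def by blast
  show ?thesis unfolding e
    by (intro closed_Collect_conj closed_Collect_all closed_Collect_imp closed_Collect_eq closed_Collect_le
        continuous_intros open_Collect_const')
qed

lemma pba_box: assumes "is_field Omega A" shows "pba Omega A \<subseteq> {f. \<forall>x. f x \<in> {0..1}}"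
proof
  fix P assume P: "P \<in> pba Omega A"
  have "P E \<in> {0..1}" for E
  proof (cases "E \<in> A")
    case True then show ?thesis using pba_ba(2)[OF assms P] by simp
  next
    case False then show ?thesis using P unfolding pba_def by simp
  qed
  then show "P \<in> {f. \<forall>x. f x \<in> {0..1}}" by blast
qed

lemma pba_compact: assumes "is_field Omega A" shows "compact (pba Omega A)"
proof -
  have "compact ({f::'a set \<Rightarrow> real. \<forall>x. f x \<in> {0..1}} \<inter> pba Omega A)"
    by (rule compact_Int_closed[OF compact_funbox pba_closed]) simp
  moreover have "{f::'a set \<Rightarrow> real. \<forall>x. f x \<in> {0..1}} \<inter> pba Omega A = pba Omega A"
    using pba_box[OF assms] by blast
  ultimately show ?thesis by simp
qed

lemma closed_pts: "closed S \<Longrightarrow> (\<And>T. open T \<Longrightarrow> x \<in> T \<Longrightarrow> \<exists>y\<in>S. y \<in> T) \<Longrightarrow> x \<in> S"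
proof (rule ccontr)
  assume "closed S" "\<And>T. open T \<Longrightarrow> x \<in> T \<Longrightarrow> \<exists>y\<in>S. y \<in> T" "x \<notin> S"
  then have "\<exists>y\<in>S. y \<in> - S" using open_Compl by blast
  then show False by blast
qed

lemma Pi_closed:
  assumes TS: "type_space N Omega A M t" and i: "i \<in> N"
  shows "closed (Pi_set Omega A t i)"
proof (rule closedI_pts)
  have F: "is_field Omega A" by (rule ts_field[OF TS])
  let ?S = "conv_sf (belief A t i ` Omega)"
  fix mu assume H: "\<And>T. open T \<Longrightarrow> mu \<in> T \<Longrightarrow> \<exists>y\<in>Pi_set Omega A t i. y \<in> T"
  have mp: "mu \<in> pba Omega A"
  proof (rule closed_pts[OF pba_closed])
    fix T assume "open T" "mu \<in> T"
    then obtain y where "y \<in> Pi_set Omega A t i" "y \<in> T" using H by blast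
    then show "\<exists>y\<in>pba Omega A. y \<in> T" using Pi_pba[OF TS i] by blast
  qed
  have "\<forall>FF e. finite FF \<and> FF \<subseteq> Bsp Omega A \<and> e > 0 \<longrightarrow>
      (\<exists>nu\<in>?S. \<forall>f\<in>FF. \<bar>integ Omega A mu f - integ Omega A nu f\<bar> < e)"
  proof (intro allI impI)
    fix FF and e :: real assume a: "finite FF \<and> FF \<subseteq> Bsp Omega A \<and> 0 < e"
    have e16: "0 < e / 16" using a by simp
    have "\<forall>g\<in>FF. \<exists>s. simple_fn Omega A s \<and> (\<forall>w\<in>Omega. \<bar>g w - s w\<bar> < e / 16)"
    proof
      fix g assume "g \<in> FF"
      then have "g \<in> Bsp Omega A" using a by blast
      then obtain s where "simple_fn Omega A s" "\<And>w. w \<in> Omega \<Longrightarrow> \<bar>g w - s w\<bar> < e / 16"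
        using Bsp_approx[OF _ e16] by blast
      then show "\<exists>s. simple_fn Omega A s \<and> (\<forall>w\<in>Omega. \<bar>g w - s w\<bar> < e / 16)" by blast
    qed
    then obtain sg where sg: "\<And>g. g \<in> FF \<Longrightarrow> simple_fn Omega A (sg g)"
      "\<And>g w. g \<in> FF \<Longrightarrow> w \<in> Omega \<Longrightarrow> \<bar>g w - sg g w\<bar> < e / 16"
      by metis
    define T where "T = (\<Inter>g\<in>FF. {nu. \<bar>simple_integral Omega mu (sg g) - simple_integral Omega nu (sg g)\<bar> < e / 8})"
    have oT: "open T" unfolding T_def
    proof (rule open_INT)
      show "finite FF" using a by blast
      show "\<forall>g\<in>FF. open {nu. \<bar>simple_integral Omega mu (sg g) - simple_integral Omega nu (sg g)\<bar> < e / 8}"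
        by (intro ballI open_Collect_less continuous_on_rabs continuous_on_diff continuous_on_const SI_cont)
    qed
    have "mu \<in> T" unfolding T_def using a by simp
    then obtain nu' where nu': "nu' \<in> Pi_set Omega A t i" "nu' \<in> T" using H[OF oT] by blast
    have nu'p: "nu' \<in> pba Omega A" using nu'(1) Pi_pba[OF TS i] by blast
    have "\<forall>FF e. finite FF \<and> FF \<subseteq> Bsp Omega A \<and> e > 0 \<longrightarrow>
      (\<exists>nu\<in>?S. \<forall>f\<in>FF. \<bar>integ Omega A nu' f - integ Omega A nu f\<bar> < e)"
      using nu'(1) unfolding Pi_set_def wstar_closure_def by blast
    then obtain nu where nu: "nu \<in> ?S" "\<And>f. f \<in> FF \<Longrightarrow> \<bar>integ Omega A nu' f - integ Omega A nu f\<bar> < e / 2"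
      using a by (metis half_gt_zero)
    show "\<exists>nu\<in>?S. \<forall>f\<in>FF. \<bar>integ Omega A mu f - integ Omega A nu f\<bar> < e"
    proof (intro bexI[OF _ nu(1)] ballI)
      fix g assume g: "g \<in> FF"
      have gB: "g \<in> Bsp Omega A" using a g by blast
      have se: "\<And>w. w \<in> Omega \<Longrightarrow> \<bar>g w - sg g w\<bar> \<le> e / 16" using sg(2)[OF g] less_imp_le by blast
      have 1: "\<bar>integ Omega A mu g - simple_integral Omega mu (sg g)\<bar> \<le> 2 * 1 * (e / 16)"
        by (rule integ_approx[OF F pba_fa[OF mp] pba_bd[OF F mp] gB sg(1)[OF g] se less_imp_le[OF e16]])
      have 2: "\<bar>integ Omega A nu' g - simple_integral Omega nu' (sg g)\<bar> \<le> 2 * 1 * (e / 16)"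
        by (rule integ_approx[OF F pba_fa[OF nu'p] pba_bd[OF F nu'p] gB sg(1)[OF g] se less_imp_le[OF e16]])
      have 3: "\<bar>simple_integral Omega mu (sg g) - simple_integral Omega nu' (sg g)\<bar> < e / 8"
        using nu'(2) g unfolding T_def by blast
      have 4: "\<bar>integ Omega A nu' g - integ Omega A nu g\<bar> < e / 2" by (rule nu(2)[OF g])
      show "\<bar>integ Omega A mu g - integ Omega A nu g\<bar> < e" using 1 2 3 4 by linarith
    qed
  qed
  then show "mu \<in> Pi_set Omega A t i"
    unfolding Pi_set_def wstar_closure_def using pba_in_ba[OF F mp] by blast
qed

lemma Pi_compact:
  assumes TS: "type_space N Omega A M t" and i: "i \<in> N"
  shows "compact (Pi_set Omega A t i)"
proof -
  have "compact (pba Omega A \<inter> Pi_set Omega A t i)"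
    by (rule compact_Int_closed[OF pba_compact[OF ts_field[OF TS]] Pi_closed[OF TS i]])
  moreover have "pba Omega A \<inter> Pi_set Omega A t i = Pi_set Omega A t i" using Pi_pba[OF TS i] by blast
  ultimately show ?thesis by simp
qed

lemma sum_split2:
  fixes h :: "nat \<Rightarrow> 'b::comm_monoid_add"
  assumes "finite K1" "finite K2"
  shows "(\<Sum>k\<in>(\<lambda>k. 2*k) ` K1 \<union> (\<lambda>k. 2*k+1) ` K2. h k) = (\<Sum>k\<in>K1. h (2*k)) + (\<Sum>k\<in>K2. h (2*k+1))"
proof -
  have d: "(\<lambda>k. 2*k) ` K1 \<inter> (\<lambda>k. 2*k+1) ` K2 = {}" by auto presburger
  have i1: "inj_on (\<lambda>k::nat. 2*k) K1" by (rule inj_onI) simp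
  have i2: "inj_on (\<lambda>k::nat. 2*k+1) K2" by (rule inj_onI) simp
  show ?thesis
    using sum.union_disjoint[OF finite_imageI[OF assms(1)] finite_imageI[OF assms(2)] d, of h]
      sum.reindex[OF i1, of h] sum.reindex[OF i2, of h] by simp
qed

lemma conv_mix:
  assumes n1: "nu1 \<in> conv_sf S" and n2: "nu2 \<in> conv_sf S" and t: "0 \<le> t" "t \<le> 1"
  shows "(\<lambda>E. (1 - t) * nu1 E + t * nu2 E) \<in> conv_sf S"
proof -
  obtain K1 :: "nat set" and c1 m1 where K1: "finite K1" "\<forall>k\<in>K1. c1 k \<ge> 0 \<and> m1 k \<in> S" "sum c1 K1 = 1"
    "nu1 = (\<lambda>E. \<Sum>k\<in>K1. c1 k * m1 k E)" using n1 unfolding conv_sf_def by blast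
  obtain K2 :: "nat set" and c2 m2 where K2: "finite K2" "\<forall>k\<in>K2. c2 k \<ge> 0 \<and> m2 k \<in> S" "sum c2 K2 = 1"
    "nu2 = (\<lambda>E. \<Sum>k\<in>K2. c2 k * m2 k E)" using n2 unfolding conv_sf_def by blast
  define K where "K = (\<lambda>k. 2*k) ` K1 \<union> (\<lambda>k. 2*k+1) ` K2"
  define c where "c = (\<lambda>k::nat. if even k then (1 - t) * c1 (k div 2) else t * c2 (k div 2))"
  define m where "m = (\<lambda>k::nat. if even k then m1 (k div 2) else m2 (k div 2))"
  have fK: "finite K" unfolding K_def using K1(1) K2(1) by simp
  have cm: "\<forall>k\<in>K. c k \<ge> 0 \<and> m k \<in> S"
    unfolding K_def c_def m_def using K1(2) K2(2) t by auto
  have sc: "sum c K = 1"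
    unfolding K_def sum_split2[OF K1(1) K2(1)]
    using K1(3) K2(3) by (simp add: c_def sum_distrib_left[symmetric])
  have eq: "(\<lambda>E. (1 - t) * nu1 E + t * nu2 E) = (\<lambda>E. \<Sum>k\<in>K. c k * m k E)"
  proof
    fix E
    show "(1 - t) * nu1 E + t * nu2 E = (\<Sum>k\<in>K. c k * m k E)"
      unfolding K_def sum_split2[OF K1(1) K2(1)] K1(4) K2(4)
      by (simp add: c_def m_def sum_distrib_left mult.assoc)
  qed
  show ?thesis unfolding eq conv_sf_def using fK cm sc by blast
qed

lemma mix2_eq: "(\<lambda>E. (1 - t) * mu1 E + t * mu2 E) =
   (\<lambda>E. \<Sum>k\<in>{0::nat, 1}. (\<lambda>k. if k = 0 then 1 - t else t) k * (\<lambda>k. if k = 0 then mu1 else mu2) k E)"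
  by simp

lemma mix2_pba: assumes F: "is_field Omega A" "mu1 \<in> pba Omega A" "mu2 \<in> pba Omega A" "0 \<le> t" "t \<le> 1"
  shows "(\<lambda>E. (1 - t) * mu1 E + t * mu2 E) \<in> pba Omega A"
  unfolding mix2_eq by (rule mix_pba[OF F(1)]) (use F in auto)

lemma integ_mix2: assumes F: "is_field Omega A" "mu1 \<in> pba Omega A" "mu2 \<in> pba Omega A" "0 \<le> t" "t \<le> 1"
  and f: "f \<in> Bsp Omega A"
  shows "integ Omega A (\<lambda>E. (1 - t) * mu1 E + t * mu2 E) f = (1 - t) * integ Omega A mu1 f + t * integ Omega A mu2 f"
  unfolding mix2_eq by (subst integ_mix[OF F(1) _ _ _ f]) (use F in auto)

lemma conv_abs: fixes x y e t :: real assumes "0 \<le> t" "t \<le> 1" "\<bar>x\<bar> < e" "\<bar>y\<bar> < e"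
  shows "\<bar>(1 - t) * x + t * y\<bar> < e"
proof -
  have "\<bar>(1 - t) * x + t * y\<bar> \<le> (1 - t) * \<bar>x\<bar> + t * \<bar>y\<bar>"
    using assms(1,2) by (metis abs_mult abs_of_nonneg abs_triangle_ineq diff_ge_0_iff_ge)
  also have "\<dots> \<le> (1 - t) * max \<bar>x\<bar> \<bar>y\<bar> + t * max \<bar>x\<bar> \<bar>y\<bar>"
    using assms(1,2) by (intro add_mono mult_left_mono) simp_all
  also have "\<dots> = max \<bar>x\<bar> \<bar>y\<bar>" by (simp add: algebra_simps)
  also have "\<dots> < e" using assms(3,4) by simp
  finally show ?thesis .
qed

lemma Pi_convex:
  assumes TS: "type_space N Omega A M t" and i: "i \<in> N"
    and m1: "mu1 \<in> Pi_set Omega A t i" and m2: "mu2 \<in> Pi_set Omega A t i" and r: "0 \<le> r" "r \<le> 1"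
  shows "(\<lambda>E. (1 - r) * mu1 E + r * mu2 E) \<in> Pi_set Omega A t i"
proof -
  have F: "is_field Omega A" by (rule ts_field[OF TS])
  let ?S = "conv_sf (belief A t i ` Omega)"
  have p1: "mu1 \<in> pba Omega A" and p2: "mu2 \<in> pba Omega A" using m1 m2 Pi_pba[OF TS i] by blast+
  have mp: "(\<lambda>E. (1 - r) * mu1 E + r * mu2 E) \<in> pba Omega A" by (rule mix2_pba[OF F p1 p2 r])
  have W1: "\<forall>FF e. finite FF \<and> FF \<subseteq> Bsp Omega A \<and> e > 0 \<longrightarrow>
      (\<exists>nu\<in>?S. \<forall>f\<in>FF. \<bar>integ Omega A mu1 f - integ Omega A nu f\<bar> < e)"
    using m1 unfolding Pi_set_def wstar_closure_def by blast
  have W2: "\<forall>FF e. finite FF \<and> FF \<subseteq> Bsp Omega A \<and> e > 0 \<longrightarrow>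
      (\<exists>nu\<in>?S. \<forall>f\<in>FF. \<bar>integ Omega A mu2 f - integ Omega A nu f\<bar> < e)"
    using m2 unfolding Pi_set_def wstar_closure_def by blast
  have "\<forall>FF e. finite FF \<and> FF \<subseteq> Bsp Omega A \<and> e > 0 \<longrightarrow>
      (\<exists>nu\<in>?S. \<forall>f\<in>FF. \<bar>integ Omega A (\<lambda>E. (1 - r) * mu1 E + r * mu2 E) f - integ Omega A nu f\<bar> < e)"
  proof (intro allI impI)
    fix FF and e :: real assume a: "finite FF \<and> FF \<subseteq> Bsp Omega A \<and> 0 < e"
    obtain nu1 where n1: "nu1 \<in> ?S" "\<And>f. f \<in> FF \<Longrightarrow> \<bar>integ Omega A mu1 f - integ Omega A nu1 f\<bar> < e"
      using W1 a by metis
    obtain nu2 where n2: "nu2 \<in> ?S" "\<And>f. f \<in> FF \<Longrightarrow> \<bar>integ Omega A mu2 f - integ Omega A nu2 f\<bar> < e"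
      using W2 a by metis
    have q1: "nu1 \<in> pba Omega A" and q2: "nu2 \<in> pba Omega A" using n1(1) n2(1) beliefs_pba[OF TS i] by blast+
    show "\<exists>nu\<in>?S. \<forall>f\<in>FF. \<bar>integ Omega A (\<lambda>E. (1 - r) * mu1 E + r * mu2 E) f - integ Omega A nu f\<bar> < e"
    proof (intro bexI[OF _ conv_mix[OF n1(1) n2(1) r]] ballI)
      fix f assume f: "f \<in> FF"
      have fB: "f \<in> Bsp Omega A" using a f by blast
      have "integ Omega A (\<lambda>E. (1 - r) * mu1 E + r * mu2 E) f - integ Omega A (\<lambda>E. (1 - r) * nu1 E + r * nu2 E) f
        = (1 - r) * (integ Omega A mu1 f - integ Omega A nu1 f) + r * (integ Omega A mu2 f - integ Omega A nu2 f)"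
        unfolding integ_mix2[OF F p1 p2 r fB] integ_mix2[OF F q1 q2 r fB] by (simp add: algebra_simps)
      also have "\<bar>\<dots>\<bar> < e" by (rule conv_abs[OF r n1(2)[OF f] n2(2)[OF f]])
      finally show "\<bar>integ Omega A (\<lambda>E. (1 - r) * mu1 E + r * mu2 E) f - integ Omega A (\<lambda>E. (1 - r) * nu1 E + r * nu2 E) f\<bar> < e" .
    qed
  qed
  then show ?thesis unfolding Pi_set_def wstar_closure_def using pba_in_ba[OF F mp] by blast
qed

lemma semibet_pos:
  assumes "semi_bet N Omega A t I f" "w \<in> Omega" "i \<in> I"
  shows "0 \<le> integ Omega A (belief A t i w) (f i)"
proof -
  have "commonly_certain Omega A t I {w'\<in>Omega. \<forall>i\<in>I. integ Omega A (belief A t i w') (f i) \<ge> 0} w"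
    using assms(1,2) unfolding semi_bet_def by blast
  then obtain S where "w \<in> S" "S \<subseteq> {w'\<in>Omega. \<forall>i\<in>I. integ Omega A (belief A t i w') (f i) \<ge> 0}"
    unfolding commonly_certain_def by blast
  then show ?thesis using assms(3) by blast
qed

lemma dirA:
  assumes TS: "type_space N Omega A M t" and C: "consistent N Omega A t"
  shows "\<not> money_pump N Omega A t"
proof -
  have F: "is_field Omega A" by (rule ts_field[OF TS])
  have cI: "(\<Inter>i\<in>I. Pi_set Omega A t i) \<noteq> {}" if "finite I" "I \<subseteq> N" for I
    using C that unfolding consistent_def by blast
  obtain i0 where i0: "i0 \<in> N" using TS unfolding type_space_def by blast
  have "pba Omega A \<inter> (\<Inter>i\<in>N. Pi_set Omega A t i) \<noteq> {}"
  proof (rule compact_imp_fip_image[OF pba_compact[OF F]])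
    show "\<And>i. i \<in> N \<Longrightarrow> closed (Pi_set Omega A t i)" by (rule Pi_closed[OF TS])
    fix I assume I: "finite I" "I \<subseteq> N"
    show "pba Omega A \<inter> (\<Inter>i\<in>I. Pi_set Omega A t i) \<noteq> {}"
    proof (cases "I = {}")
      case True
      have "Pi_set Omega A t i0 \<noteq> {}" using cI[of "{i0}"] i0 by simp
      then have "pba Omega A \<noteq> {}" using Pi_pba[OF TS i0] by blast
      then show ?thesis using True by simp
    next
      case False
      then obtain j where j: "j \<in> I" by blast
      have "(\<Inter>i\<in>I. Pi_set Omega A t i) \<subseteq> pba Omega A" using Pi_pba[OF TS] I(2) j by blast
      then show ?thesis using cI[OF I] by blast
    qed
  qed
  then obtain Q where Qp: "Q \<in> pba Omega A" and QP: "\<And>i. i \<in> N \<Longrightarrow> Q \<in> Pi_set Omega A t i" by blast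
  have "0 \<le> integ Omega A Q (\<lambda>w. \<Sum>i\<in>I. f i w)" if sb: "semi_bet N Omega A t I f" for I f
  proof -
    have I: "finite I" "I \<subseteq> N" "\<And>i. i \<in> I \<Longrightarrow> f i \<in> Bsp Omega A" using sb unfolding semi_bet_def by blast+
    have "integ Omega A Q (\<lambda>w. \<Sum>i\<in>I. f i w) = (\<Sum>i\<in>I. integ Omega A Q (f i))"
      by (rule integ_sum[OF F pba_fa[OF Qp] pba_bd[OF F Qp] I(1) I(3)])
    also have "\<dots> \<ge> 0"
    proof (rule sum_nonneg)
      fix i assume i: "i \<in> I"
      show "0 \<le> integ Omega A Q (f i)"
        by (rule Pi_nonneg[OF TS _ QP I(3)[OF i]]) (use i I(2) semibet_pos[OF sb _ i] in blast)+
    qed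
    finally show ?thesis .
  qed
  then show ?thesis unfolding money_pump_def using Qp by (meson not_less)
qed

definition mean :: "'i set \<Rightarrow> ('i \<Rightarrow> 'e \<Rightarrow> real) \<Rightarrow> 'e \<Rightarrow> real" where
  "mean I Q E = (\<Sum>j\<in>I. Q j E) / real (card I)"
definition dv :: "'i set \<Rightarrow> ('i \<Rightarrow> 'e \<Rightarrow> real) \<Rightarrow> 'i \<Rightarrow> 'e \<Rightarrow> real" where
  "dv I Q i E = Q i E - mean I Q E"
definition VV :: "'i set \<Rightarrow> 'e set \<Rightarrow> ('i \<Rightarrow> 'e \<Rightarrow> real) \<Rightarrow> real" where
  "VV I EE Q = (\<Sum>E\<in>EE. \<Sum>i\<in>I. (dv I Q i E)^2)"

lemma dv_sum0: assumes "finite I" "I \<noteq> {}" shows "(\<Sum>i\<in>I. dv I Q i E) = 0"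
  using assms unfolding dv_def mean_def by (simp add: sum_subtractf)

lemma mean_mix: "mean I (\<lambda>i E. (1 - r) * Q1 i E + r * Q2 i E) E = (1 - r) * mean I Q1 E + r * mean I Q2 E"
  unfolding mean_def by (simp add: sum.distrib sum_distrib_left add_divide_distrib)

lemma dv_mix: "dv I (\<lambda>i E. (1 - r) * Q1 i E + r * Q2 i E) i E = (1 - r) * dv I Q1 i E + r * dv I Q2 i E"
  unfolding dv_def mean_mix by (simp add: algebra_simps)

lemma quad_lemma:
  fixes S1 S2 :: real
  assumes S2: "0 \<le> S2" and h: "\<And>r. 0 < r \<Longrightarrow> r \<le> 1 \<Longrightarrow> 0 \<le> 2 * r * S1 + r^2 * S2"
  shows "0 \<le> S1"
proof (rule ccontr)
  assume "\<not> 0 \<le> S1"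
  then have n: "S1 < 0" by simp
  define r where "r = min 1 (- S1 / (S2 + 1))"
  have "0 < S2 + 1" using S2 by simp
  then have "0 < - S1 / (S2 + 1)" using n by (simp add: divide_neg_pos)
  then have r0: "0 < r" unfolding r_def by simp
  have r1: "r \<le> 1" unfolding r_def by simp
  have rS: "r * S2 < - S1"
  proof -
    have "r * S2 \<le> (- S1 / (S2 + 1)) * S2" unfolding r_def using S2 by (intro mult_right_mono) simp_all
    also have "\<dots> < - S1" using n S2 by (simp add: field_simps)
    finally show ?thesis .
  qed
  have "2 * r * S1 + r^2 * S2 = r * (2 * S1 + r * S2)" by (simp add: power2_eq_square algebra_simps)
  also have "\<dots> < 0" using r0 rS n by (intro mult_pos_neg) linarith+
  finally show False using h[OF r0 r1] by simp
qed

lemma sep_core: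
  fixes K :: "('i \<Rightarrow> 'e \<Rightarrow> real) set"
  assumes I: "finite I" "I \<noteq> {}" and EE: "finite EE"
    and mix: "\<And>Q1 Q2 r. Q1 \<in> K \<Longrightarrow> Q2 \<in> K \<Longrightarrow> 0 \<le> r \<Longrightarrow> r \<le> 1 \<Longrightarrow> (\<lambda>i E. (1 - r) * Q1 i E + r * Q2 i E) \<in> K"
    and Qs: "Qs \<in> K" "\<And>Q. Q \<in> K \<Longrightarrow> VV I EE Qs \<le> VV I EE Q"
    and Q: "Q \<in> K"
  shows "VV I EE Qs \<le> (\<Sum>i\<in>I. \<Sum>E\<in>EE. dv I Qs i E * Q i E)"
proof -
  let ?u = "dv I Qs" and ?v = "dv I Q"
  define S1 where "S1 = (\<Sum>E\<in>EE. \<Sum>i\<in>I. ?u i E * (?v i E - ?u i E))"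
  define S2 where "S2 = (\<Sum>E\<in>EE. \<Sum>i\<in>I. (?v i E - ?u i E)^2)"
  have S2: "0 \<le> S2" unfolding S2_def by (intro sum_nonneg) simp
  have "0 \<le> 2 * r * S1 + r^2 * S2" if r: "0 < r" "r \<le> 1" for r
  proof -
    let ?Qr = "\<lambda>i E. (1 - r) * Qs i E + r * Q i E"
    have "?Qr \<in> K" using mix[OF Qs(1) Q] r by simp
    then have le: "VV I EE Qs \<le> VV I EE ?Qr" by (rule Qs(2))
    have pt: "(dv I ?Qr i E)^2 = (?u i E)^2 + (2 * r * (?u i E * (?v i E - ?u i E)) + r^2 * (?v i E - ?u i E)^2)" for i E
      unfolding dv_mix by (simp add: power2_eq_square algebra_simps)
    have "VV I EE ?Qr = VV I EE Qs + (2 * r * S1 + r^2 * S2)"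
      unfolding VV_def S1_def S2_def pt by (simp add: sum.distrib sum_distrib_left)
    then show ?thesis using le by simp
  qed
  then have "0 \<le> S1" by (rule quad_lemma[OF S2])
  moreover have "S1 = (\<Sum>E\<in>EE. \<Sum>i\<in>I. ?u i E * ?v i E) - VV I EE Qs"
    unfolding S1_def VV_def by (simp add: right_diff_distrib sum_subtractf power2_eq_square)
  moreover have "(\<Sum>E\<in>EE. \<Sum>i\<in>I. ?u i E * ?v i E) = (\<Sum>E\<in>EE. \<Sum>i\<in>I. ?u i E * Q i E)"
  proof (rule sum.cong[OF refl])
    fix E
    have "(\<Sum>i\<in>I. ?u i E * ?v i E) = (\<Sum>i\<in>I. ?u i E * Q i E) - (\<Sum>i\<in>I. ?u i E) * mean I Q E"
      unfolding dv_def[of I Q] by (simp add: right_diff_distrib sum_subtractf sum_distrib_right)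
    then show "(\<Sum>i\<in>I. ?u i E * ?v i E) = (\<Sum>i\<in>I. ?u i E * Q i E)" using dv_sum0[OF I, of Qs E] by simp
  qed
  moreover have "(\<Sum>E\<in>EE. \<Sum>i\<in>I. ?u i E * Q i E) = (\<Sum>i\<in>I. \<Sum>E\<in>EE. ?u i E * Q i E)" by (rule sum.swap)
  ultimately show ?thesis by linarith
qed

lemma cont_coord2: "continuous_on S (\<lambda>Q::'i \<Rightarrow> 'e \<Rightarrow> real. Q i E)"
  by (rule continuous_on_product_then_coordinatewise[OF cont_coord])

lemma closed_coord_in: assumes "closed C" shows "closed {Q::'i \<Rightarrow> 'b::topological_space. Q i \<in> C}"
proof -
  have "continuous_on UNIV (\<lambda>Q::'i \<Rightarrow> 'b. Q i)" by (rule cont_coord)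
  then have "closed ((\<lambda>Q::'i \<Rightarrow> 'b. Q i) -` C \<inter> UNIV)"
    using continuous_on_closed_vimage[OF closed_UNIV] assms by blast
  moreover have "(\<lambda>Q::'i \<Rightarrow> 'b. Q i) -` C \<inter> UNIV = {Q. Q i \<in> C}" by auto
  ultimately show ?thesis by simp
qed

lemma dirB:
  assumes TS: "type_space N Omega A M t" and NC: "\<not> consistent N Omega A t"
  shows "money_pump N Omega A t"
proof -
  have F: "is_field Omega A" by (rule ts_field[OF TS])
  obtain I where I: "finite I" "I \<subseteq> N" and empt: "(\<Inter>i\<in>I. Pi_set Omega A t i) = {}"
    using NC unfolding consistent_def by blast
  have Ine: "I \<noteq> {}" using empt by auto
  have IN: "\<And>i. i \<in> I \<Longrightarrow> i \<in> N" using I(2) by blast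
  show ?thesis
  proof (cases "Omega = {}")
    case True
    have "pba Omega A = {}"
    proof (rule ccontr)
      assume "pba Omega A \<noteq> {}"
      then obtain P where P: "P \<in> pba Omega A" by blast
      have "P {} = 0" by (rule fin_add_empty[OF pba_fa[OF P] field_empty[OF F]])
      then show False using pba_top[OF P] True by simp
    qed
    then show ?thesis unfolding money_pump_def by blast
  next
    case False
    then obtain w0 where w0: "w0 \<in> Omega" by blast
    define K where "K = {Q :: 'a \<Rightarrow> 'b set \<Rightarrow> real. \<forall>i. (i \<in> I \<longrightarrow> Q i \<in> Pi_set Omega A t i) \<and> (i \<notin> I \<longrightarrow> (\<forall>E. Q i E = 0))}"
    have Kmix: "(\<lambda>i E. (1 - r) * Q1 i E + r * Q2 i E) \<in> K"
      if "Q1 \<in> K" "Q2 \<in> K" "0 \<le> r" "r \<le> 1" for Q1 Q2 r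
    proof -
      have "(\<lambda>E. (1 - r) * Q1 i E + r * Q2 i E) \<in> Pi_set Omega A t i" if i: "i \<in> I" for i
        by (rule Pi_convex[OF TS IN[OF i]]) (use \<open>Q1 \<in> K\<close> \<open>Q2 \<in> K\<close> \<open>0 \<le> r\<close> \<open>r \<le> 1\<close> i in \<open>simp_all add: K_def\<close>)
      moreover have "(1 - r) * Q1 i E + r * Q2 i E = 0" if i: "i \<notin> I" for i E
        using \<open>Q1 \<in> K\<close> \<open>Q2 \<in> K\<close> i by (simp add: K_def)
      ultimately show ?thesis unfolding K_def by simp
    qed
    have Kclosed: "closed K"
    proof -
      have "K = (\<Inter>i\<in>I. {Q. Q i \<in> Pi_set Omega A t i}) \<inter> {Q. \<forall>i. i \<notin> I \<longrightarrow> (\<forall>E. Q i E = 0)}"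
        unfolding K_def by blast
      also have "closed \<dots>"
      proof (rule closed_Int)
        show "closed (\<Inter>i\<in>I. {Q::'a \<Rightarrow> 'b set \<Rightarrow> real. Q i \<in> Pi_set Omega A t i})"
        proof (rule closed_INT, intro ballI)
          fix i assume i: "i \<in> I"
          show "closed {Q::'a \<Rightarrow> 'b set \<Rightarrow> real. Q i \<in> Pi_set Omega A t i}"
            by (rule closed_coord_in[OF Pi_closed[OF TS IN[OF i]]])
        qed
        show "closed {Q::'a \<Rightarrow> 'b set \<Rightarrow> real. \<forall>i. i \<notin> I \<longrightarrow> (\<forall>E. Q i E = 0)}"
          by (intro closed_Collect_all closed_Collect_imp open_Collect_const' closed_Collect_eq cont_coord2 continuous_on_const)
      qed
      finally show ?thesis .
    qed
    have Kbox: "K \<subseteq> {Q. \<forall>i. Q i \<in> {f. \<forall>x. f x \<in> {0..1}}}"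
    proof
      fix Q assume Q: "Q \<in> K"
      have "Q i \<in> {f. \<forall>x. f x \<in> {0..1}}" for i
      proof (cases "i \<in> I")
        case True
        then have "Q i \<in> pba Omega A" using Q Pi_pba[OF TS IN[OF True]] unfolding K_def by blast
        then show ?thesis using pba_box[OF F] by blast
      next
        case False then show ?thesis using Q unfolding K_def by simp
      qed
      then show "Q \<in> {Q. \<forall>i. Q i \<in> {f. \<forall>x. f x \<in> {0..1}}}" by blast
    qed
    have Kc: "compact K"
    proof -
      have "compact ({Q::'a \<Rightarrow> 'b set \<Rightarrow> real. \<forall>i. Q i \<in> {f. \<forall>x. f x \<in> {0..1}}} \<inter> K)"
        by (rule compact_Int_closed[OF compact_funbox[OF compact_funbox[OF compact_Icc]] Kclosed])
      moreover have "{Q::'a \<Rightarrow> 'b set \<Rightarrow> real. \<forall>i. Q i \<in> {f. \<forall>x. f x \<in> {0..1}}} \<inter> K = K" using Kbox by blast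
      ultimately show ?thesis by simp
    qed
    define Q0 where "Q0 = (\<lambda>i. if i \<in> I then belief A t i w0 else (\<lambda>E. 0))"
    have Q0K: "Q0 \<in> K" unfolding K_def Q0_def using belief_Pi[OF TS IN w0] by simp
    define C where "C = (\<lambda>EE. {Q :: 'a \<Rightarrow> 'b set \<Rightarrow> real. \<forall>E. E \<in> EE \<longrightarrow> (\<forall>i. i \<in> I \<longrightarrow> (\<forall>j. j \<in> I \<longrightarrow> Q i E = Q j E))})"
    have "\<exists>EE. finite EE \<and> EE \<subseteq> A \<and> K \<inter> C EE = {}"
    proof (rule ccontr)
      assume H: "\<not> (\<exists>EE. finite EE \<and> EE \<subseteq> A \<and> K \<inter> C EE = {})"
      have "K \<inter> (\<Inter>EE\<in>{EE. finite EE \<and> EE \<subseteq> A}. C EE) \<noteq> {}"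
      proof (rule compact_imp_fip_image[OF Kc])
        show "closed (C EE)" for EE unfolding C_def
          by (intro closed_Collect_all closed_Collect_imp open_Collect_const' closed_Collect_eq cont_coord2)
        fix G assume G: "finite G" "G \<subseteq> {EE. finite EE \<and> EE \<subseteq> A}"
        have fU: "finite (\<Union>G)" "\<Union>G \<subseteq> A" using G by auto
        have "C (\<Union>G) \<subseteq> (\<Inter>EE\<in>G. C EE)" unfolding C_def by blast
        moreover have "K \<inter> C (\<Union>G) \<noteq> {}" using H fU by blast
        ultimately show "K \<inter> (\<Inter>EE\<in>G. C EE) \<noteq> {}" by blast
      qed
      then obtain Q where Q: "Q \<in> K" "\<And>EE. finite EE \<Longrightarrow> EE \<subseteq> A \<Longrightarrow> Q \<in> C EE" by blast
      obtain i0 where i0: "i0 \<in> I" using Ine by blast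
      have "Q i = Q i0" if i: "i \<in> I" for i
      proof
        fix E show "Q i E = Q i0 E"
        proof (cases "E \<in> A")
          case True
          have "Q \<in> C {E}" by (rule Q(2)) (use True in simp_all)
          then show ?thesis using i i0 unfolding C_def by blast
        next
          case False
          have "Q i \<in> pba Omega A" "Q i0 \<in> pba Omega A"
            using Q(1) i i0 Pi_pba[OF TS IN] unfolding K_def by blast+
          then show ?thesis using False unfolding pba_def by simp
        qed
      qed
      then have "Q i0 \<in> (\<Inter>i\<in>I. Pi_set Omega A t i)" using Q(1) unfolding K_def by force
      then show False using empt by blast
    qed
    then obtain EE where EE: "finite EE" "EE \<subseteq> A" "K \<inter> C EE = {}" by blast
    have Vcont: "continuous_on K (VV I EE)"
      unfolding VV_def dv_def mean_def
      by (intro continuous_on_sum continuous_on_power continuous_on_diff continuous_on_divide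
          continuous_on_const cont_coord2) (use I(1) Ine in simp)
    obtain Qs where Qs: "Qs \<in> K" "\<And>Q. Q \<in> K \<Longrightarrow> VV I EE Qs \<le> VV I EE Q"
      using continuous_attains_inf[OF Kc _ Vcont] Q0K by blast
    have Vpos: "0 < VV I EE Qs"
    proof (rule ccontr)
      assume "\<not> 0 < VV I EE Qs"
      moreover have "0 \<le> VV I EE Qs" unfolding VV_def by (intro sum_nonneg) simp
      ultimately have "VV I EE Qs = 0" by simp
      then have "\<forall>E\<in>EE. (\<Sum>i\<in>I. (dv I Qs i E)^2) = 0"
        unfolding VV_def using sum_nonneg_eq_0_iff[OF EE(1)] by (metis (no_types, lifting) sum_nonneg zero_le_power2)
      then have z: "\<And>E i. E \<in> EE \<Longrightarrow> i \<in> I \<Longrightarrow> dv I Qs i E = 0"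
        using sum_nonneg_eq_0_iff[OF I(1)] by (metis (no_types, lifting) power_zero_numeral zero_le_power2 power_eq_0_iff)
      have "Qs \<in> C EE" unfolding C_def
      proof (intro CollectI allI impI)
        fix E i j assume "E \<in> EE" "i \<in> I" "j \<in> I"
        then show "Qs i E = Qs j E" using z[of E i] z[of E j] unfolding dv_def by simp
      qed
      then show False using EE(3) Qs(1) by blast
    qed
    define a where "a = (\<lambda>i E. dv I Qs i E)"
    have core: "VV I EE Qs \<le> (\<Sum>i\<in>I. \<Sum>E\<in>EE. a i E * Q i E)" if "Q \<in> K" for Q
      unfolding a_def by (rule sep_core[OF I(1) Ine EE(1) Kmix Qs that])
    define L where "L = (\<lambda>i (mu :: 'b set \<Rightarrow> real). \<Sum>E\<in>EE. a i E * mu E)"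
    have "\<forall>i\<in>I. \<exists>mu\<in>Pi_set Omega A t i. \<forall>nu\<in>Pi_set Omega A t i. L i mu \<le> L i nu"
    proof
      fix i assume i: "i \<in> I"
      show "\<exists>mu\<in>Pi_set Omega A t i. \<forall>nu\<in>Pi_set Omega A t i. L i mu \<le> L i nu"
      proof (rule continuous_attains_inf[OF Pi_compact[OF TS IN[OF i]]])
        show "Pi_set Omega A t i \<noteq> {}" using belief_Pi[OF TS IN[OF i] w0] by blast
        show "continuous_on (Pi_set Omega A t i) (L i)" unfolding L_def
          by (intro continuous_on_sum continuous_on_mult continuous_on_const cont_coord)
      qed
    qed
    then obtain mm where mm: "\<And>i. i \<in> I \<Longrightarrow> mm i \<in> Pi_set Omega A t i"
      "\<And>i nu. i \<in> I \<Longrightarrow> nu \<in> Pi_set Omega A t i \<Longrightarrow> L i (mm i) \<le> L i nu"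
      by metis
    define c where "c = (\<lambda>i. L i (mm i))"
    define Q' where "Q' = (\<lambda>i. if i \<in> I then mm i else (\<lambda>E. 0))"
    have Q'K: "Q' \<in> K" unfolding K_def Q'_def using mm(1) by simp
    have csum: "0 < (\<Sum>i\<in>I. c i)"
    proof -
      have "(\<Sum>i\<in>I. \<Sum>E\<in>EE. a i E * Q' i E) = (\<Sum>i\<in>I. c i)"
        by (rule sum.cong[OF refl]) (simp add: Q'_def c_def L_def)
      then show ?thesis using core[OF Q'K] Vpos by simp
    qed
    define f where "f = (\<lambda>i. lcomb EE (a i) (c i))"
    have fB: "\<And>i. f i \<in> Bsp Omega A" unfolding f_def by (rule Bsp_simple[OF simple_lcomb[OF F EE(1,2)]])
    have fpos: "0 \<le> integ Omega A (belief A t i w) (f i)" if i: "i \<in> I" and w: "w \<in> Omega" for i w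
    proof -
      have "integ Omega A (belief A t i w) (f i) = L i (belief A t i w) - c i"
        unfolding f_def L_def by (rule integ_lcomb_pba[OF F EE(1,2) ts_belief[OF TS IN[OF i] w]])
      moreover have "c i \<le> L i (belief A t i w)" unfolding c_def by (rule mm(2)[OF i belief_Pi[OF TS IN[OF i] w]])
      ultimately show ?thesis by simp
    qed
    have sb: "semi_bet N Omega A t I f"
      unfolding semi_bet_def
    proof (intro conjI ballI)
      show "finite I" "I \<subseteq> N" by (rule I(1), rule I(2))
      show "f i \<in> Bsp Omega A" for i by (rule fB)
      fix w assume w: "w \<in> Omega"
      have D: "{w'\<in>Omega. \<forall>i\<in>I. integ Omega A (belief A t i w') (f i) \<ge> 0} = Omega" using fpos by blast
      have cc: "cc_component Omega A t I Omega"
        unfolding cc_component_def using False field_top[OF F] ts_top[OF TS IN] by blast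
      show "commonly_certain Omega A t I {w'\<in>Omega. \<forall>i\<in>I. integ Omega A (belief A t i w') (f i) \<ge> 0} w"
        unfolding D commonly_certain_def using cc w by blast
    qed
    have fsum: "(\<lambda>w. \<Sum>i\<in>I. f i w) = (\<lambda>w. - (\<Sum>i\<in>I. c i))"
    proof
      fix w
      have "(\<Sum>i\<in>I. f i w) = (\<Sum>i\<in>I. \<Sum>E\<in>EE. a i E * indicator E w) - (\<Sum>i\<in>I. c i)"
        unfolding f_def lcomb_def by (simp add: sum_subtractf)
      also have "(\<Sum>i\<in>I. \<Sum>E\<in>EE. a i E * indicator E w) = (\<Sum>E\<in>EE. (\<Sum>i\<in>I. a i E) * indicator E w)"
        by (simp add: sum.swap[of _ I] sum_distrib_right)
      also have "\<dots> = 0" unfolding a_def by (simp add: dv_sum0[OF I(1) Ine])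
      finally show "(\<Sum>i\<in>I. f i w) = - (\<Sum>i\<in>I. c i)" by simp
    qed
    show ?thesis unfolding money_pump_def
    proof (intro ballI exI conjI)
      fix P assume P: "P \<in> pba Omega A"
      show "semi_bet N Omega A t I f" by (rule sb)
      have "integ Omega A P (\<lambda>w. \<Sum>i\<in>I. f i w) = simple_integral Omega P (\<lambda>w. - (\<Sum>i\<in>I. c i))"
        unfolding fsum by (rule integ_simple[OF F pba_fa[OF P] pba_bd[OF F P] simple_const[OF F]])
      also have "\<dots> = - (\<Sum>i\<in>I. c i)" using SI_const[OF F pba_fa[OF P]] pba_top[OF P] by simp
      finally show "integ Omega A P (\<lambda>w. \<Sum>i\<in>I. f i w) < 0" using csum by simp
    qed
  qed
qed

theorem theorem3:
  fixes N :: "'i set" and Omega :: "'w set" and A :: "'w set set"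
    and M :: "'i \<Rightarrow> 'w set set" and t :: "'i \<Rightarrow> 'w \<Rightarrow> 'w set \<Rightarrow> real"
  assumes "type_space N Omega A M t"
  shows "consistent N Omega A t \<longleftrightarrow> \<not> money_pump N Omega A t"
  using dirA[OF assms] dirB[OF assms] by blast

end
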